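(* Let $\gamma(s)$ be an arc-length parametrized triharmonic Frenet helix immersed in a BCV space $M(a,b)$ with $4a\neq b^2$. If the torsion of $\gamma$ is not zero, then $\gamma$ is a geodesic of a suitable Hopf cylinder.
   Context: For real $a,b$, the BCV space $M(a,b)$ is $\{(x,y,z)\in\mathbb{R}^3:\lambda_a=1+a(x^2+y^2)>0\}$ with the metric $$g_{a,b}=\frac{dx^2+dy^2}{[1+a(x^2+y^2)]^2}+\left(dz+\frac{b}{2}\,\frac{y\,dx-x\,dy}{1+a(x^2+y^2)}\right)^2.$$ The vector field $E_3=\partial_z$ is a Killing field whose flow is $\psi_t(x,y,z)=(x,y,z+t)$. A Hopf cylinder is a surface invariant under this flow, parametrized as $\mathbf{x}(s,t)=\psi_t(\widetilde\alpha(s))$ with $\widetilde\alpha$ an arc-length parametrized curve orthogonal to $E_3$. An arc-length parametrized curve $\gamma$ with $T=\gamma'$ is triharmonic if $\nabla_T^5T+R(\nabla_T^3T,T)T-R(\nabla_T^2T,\nabla_TT)T=0$, where $\nabla$ is the Levi-Civita connection and $R(X,Y)=\nabla_X\nabla_Y-\nabla_Y\nabla_X-\nabla_{[X,Y]}$. A Frenet helix is a non-geodesic curve with constant curvature $\kappa$ and constant torsion $\tau$, defined by $\nabla_TT=\kappa N$, $\nabla_TN=-\kappa T+\tau B$, $\nabla_TB=-\tau N$. *)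

theory Defs
  imports "HOL-Analysis.Analysis"
begin

text \<open>BCV space M(a,b): points of R^3 (coordinates x = p$1, y = p$2, z = p$3)
  with 1 + a(x^2+y^2) > 0.\<close>

type_synonym pt = "real^3"

definition lam :: "real \<Rightarrow> pt \<Rightarrow> real" where
  "lam a p = 1 + a * ((p$1)^2 + (p$2)^2)"

definition bcv_dom :: "real \<Rightarrow> pt set" where
  "bcv_dom a = {p. lam a p > 0}"

text \<open>The contact-type one-form  dz + (b/2)(y dx - x dy)/lambda  evaluated on u.\<close>
definition theta :: "real \<Rightarrow> real \<Rightarrow> pt \<Rightarrow> pt \<Rightarrow> real" where
  "theta a b p u = u$3 + (b/2) * (p$2 * u$1 - p$1 * u$2) / lam a p"

definition gm :: "real \<Rightarrow> real \<Rightarrow> pt \<Rightarrow> pt \<Rightarrow> pt \<Rightarrow> real" where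
  "gm a b p u v = (u$1 * v$1 + u$2 * v$2) / (lam a p)^2 + theta a b p u * theta a b p v"

definition E3 :: pt where "E3 = axis 3 1"

definition pd :: "(pt \<Rightarrow> real) \<Rightarrow> pt \<Rightarrow> 3 \<Rightarrow> real" where
  "pd f p i = deriv (\<lambda>h. f (p + h *\<^sub>R axis i 1)) 0"

definition gc :: "real \<Rightarrow> real \<Rightarrow> 3 \<Rightarrow> 3 \<Rightarrow> pt \<Rightarrow> real" where
  "gc a b i j p = gm a b p (axis i 1) (axis j 1)"

definition gmat :: "real \<Rightarrow> real \<Rightarrow> pt \<Rightarrow> real^3^3" where
  "gmat a b p = (\<chi> i j. gc a b i j p)"

definition chr :: "real \<Rightarrow> real \<Rightarrow> 3 \<Rightarrow> 3 \<Rightarrow> 3 \<Rightarrow> pt \<Rightarrow> real" where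
  "chr a b k i j p = (1/2) * (\<Sum>l\<in>UNIV. (matrix_inv (gmat a b p))$k$l *
      (pd (gc a b j l) p i + pd (gc a b i l) p j - pd (gc a b i j) p l))"

definition conn :: "real \<Rightarrow> real \<Rightarrow> pt \<Rightarrow> pt \<Rightarrow> pt \<Rightarrow> pt" where
  "conn a b p X Y = (\<chi> k. \<Sum>i\<in>UNIV. \<Sum>j\<in>UNIV. chr a b k i j p * X$i * Y$j)"

definition vel :: "(real \<Rightarrow> pt) \<Rightarrow> real \<Rightarrow> pt" where
  "vel c s = vector_derivative c (at s)"

definition covd :: "real \<Rightarrow> real \<Rightarrow> (real \<Rightarrow> pt) \<Rightarrow> (real \<Rightarrow> pt) \<Rightarrow> real \<Rightarrow> pt" where
  "covd a b c V s = vector_derivative V (at s) + conn a b (c s) (vel c s) (V s)"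

definition covdn :: "real \<Rightarrow> real \<Rightarrow> nat \<Rightarrow> (real \<Rightarrow> pt) \<Rightarrow> (real \<Rightarrow> pt) \<Rightarrow> real \<Rightarrow> pt" where
  "covdn a b n c V = ((covd a b c) ^^ n) V"

text \<open>Riemann curvature: R(d_i,d_j)d_k = sum_l Rc l k i j d_l, with
  R(X,Y) = nabla_X nabla_Y - nabla_Y nabla_X - nabla_[X,Y].\<close>
definition Rc :: "real \<Rightarrow> real \<Rightarrow> 3 \<Rightarrow> 3 \<Rightarrow> 3 \<Rightarrow> 3 \<Rightarrow> pt \<Rightarrow> real" where
  "Rc a b l k i j p = pd (chr a b l j k) p i - pd (chr a b l i k) p j
     + (\<Sum>m\<in>UNIV. chr a b m j k p * chr a b l i m p - chr a b m i k p * chr a b l j m p)"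

definition curv :: "real \<Rightarrow> real \<Rightarrow> pt \<Rightarrow> pt \<Rightarrow> pt \<Rightarrow> pt \<Rightarrow> pt" where
  "curv a b p X Y Z = (\<chi> l. \<Sum>i\<in>UNIV. \<Sum>j\<in>UNIV. \<Sum>k\<in>UNIV.
      X$i * Y$j * Z$k * Rc a b l k i j p)"

definition smooth_on :: "real set \<Rightarrow> (real \<Rightarrow> pt) \<Rightarrow> bool" where
  "smooth_on I c \<longleftrightarrow> (\<forall>n. \<forall>s\<in>I. ((vel ^^ n) c) differentiable (at s))"

definition arclength_curve :: "real \<Rightarrow> real \<Rightarrow> real set \<Rightarrow> (real \<Rightarrow> pt) \<Rightarrow> bool" where
  "arclength_curve a b I c \<longleftrightarrow> smooth_on I c \<and> (\<forall>s\<in>I. c s \<in> bcv_dom a)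
     \<and> (\<forall>s\<in>I. gm a b (c s) (vel c s) (vel c s) = 1)"

definition open_interval :: "real set \<Rightarrow> bool" where
  "open_interval I \<longleftrightarrow> I \<noteq> {} \<and> open I \<and> is_interval I"

definition triharmonic :: "real \<Rightarrow> real \<Rightarrow> real set \<Rightarrow> (real \<Rightarrow> pt) \<Rightarrow> bool" where
  "triharmonic a b I c \<longleftrightarrow> (\<forall>s\<in>I. let T = vel c in
      covdn a b 5 c T s + curv a b (c s) (covdn a b 3 c T s) (T s) (T s)
        - curv a b (c s) (covdn a b 2 c T s) (covdn a b 1 c T s) (T s) = 0)"

definition frenet_helix :: "real \<Rightarrow> real \<Rightarrow> real set \<Rightarrow> (real \<Rightarrow> pt) \<Rightarrow> real \<Rightarrow> real
    \<Rightarrow> (real \<Rightarrow> pt) \<Rightarrow> (real \<Rightarrow> pt) \<Rightarrow> bool" where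
  "frenet_helix a b I c \<kappa> \<tau> N B \<longleftrightarrow> \<kappa> > 0 \<and>
     (\<forall>s\<in>I. N differentiable (at s) \<and> B differentiable (at s)) \<and>
     (\<forall>s\<in>I. gm a b (c s) (N s) (N s) = 1 \<and> gm a b (c s) (B s) (B s) = 1 \<and>
             gm a b (c s) (vel c s) (N s) = 0 \<and> gm a b (c s) (vel c s) (B s) = 0 \<and>
             gm a b (c s) (N s) (B s) = 0) \<and>
     (\<forall>s\<in>I. covd a b c (vel c) s = \<kappa> *\<^sub>R N s \<and>
             covd a b c N s = (- \<kappa>) *\<^sub>R vel c s + \<tau> *\<^sub>R B s \<and>
             covd a b c B s = (- \<tau>) *\<^sub>R N s)"

definition psi :: "real \<Rightarrow> pt \<Rightarrow> pt" where
  "psi t p = p + t *\<^sub>R E3"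

definition hopf_generator :: "real \<Rightarrow> real \<Rightarrow> real set \<Rightarrow> (real \<Rightarrow> pt) \<Rightarrow> bool" where
  "hopf_generator a b J al \<longleftrightarrow> open_interval J \<and> arclength_curve a b J al \<and>
     (\<forall>u\<in>J. gm a b (al u) (vel al u) E3 = 0)"

text \<open>c is a geodesic of the Hopf cylinder x(u,t) = psi_t(al u): c lies on it,
  c(s) = x(u s, v s), and nabla_T T is normal to the tangent plane, which at
  x(u,t) is spanned by d psi_t(al'(u)) = al'(u) and E3.\<close>
definition geodesic_of_hopf_cylinder :: "real \<Rightarrow> real \<Rightarrow> real set \<Rightarrow> (real \<Rightarrow> pt)
    \<Rightarrow> real set \<Rightarrow> (real \<Rightarrow> pt) \<Rightarrow> bool" where
  "geodesic_of_hopf_cylinder a b I c J al \<longleftrightarrow>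
     (\<exists>u v :: real \<Rightarrow> real. \<forall>s\<in>I.
        u differentiable (at s) \<and> v differentiable (at s) \<and> u s \<in> J \<and>
        c s = psi (v s) (al (u s)) \<and>
        gm a b (c s) (covd a b c (vel c) s) E3 = 0 \<and>
        gm a b (c s) (covd a b c (vel c) s) (vel al (u s)) = 0)"

end

theory Submission
  imports Defs
begin


definition lamF :: "real \<Rightarrow> real \<Rightarrow> real \<Rightarrow> real" where
  "lamF a x y = 1 + a * (x^2 + y^2)"
definition thF :: "real \<Rightarrow> real \<Rightarrow> real \<Rightarrow> real \<Rightarrow> pt \<Rightarrow> real" where
  "thF a b x y U = U$3 + (b/2) * (y * U$1 - x * U$2) / lamF a x y"
definition gmF :: "real \<Rightarrow> real \<Rightarrow> real \<Rightarrow> real \<Rightarrow> pt \<Rightarrow> pt \<Rightarrow> real" where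
  "gmF a b x y U V = (U$1 * V$1 + U$2 * V$2) / (lamF a x y)^2 + thF a b x y U * thF a b x y V"
definition thFx :: "real \<Rightarrow> real \<Rightarrow> real \<Rightarrow> real \<Rightarrow> pt \<Rightarrow> real" where
  "thFx a b x y U = (b/2) * (- U$2 / lamF a x y - (y * U$1 - x * U$2) * (2*a*x) / (lamF a x y)^2)"
definition thFy :: "real \<Rightarrow> real \<Rightarrow> real \<Rightarrow> real \<Rightarrow> pt \<Rightarrow> real" where
  "thFy a b x y U = (b/2) * (U$1 / lamF a x y - (y * U$1 - x * U$2) * (2*a*y) / (lamF a x y)^2)"
definition gmFx :: "real \<Rightarrow> real \<Rightarrow> real \<Rightarrow> real \<Rightarrow> pt \<Rightarrow> pt \<Rightarrow> real" where
  "gmFx a b x y U V = - (U$1 * V$1 + U$2 * V$2) * (4*a*x) / (lamF a x y)^3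
     + thFx a b x y U * thF a b x y V + thF a b x y U * thFx a b x y V"
definition gmFy :: "real \<Rightarrow> real \<Rightarrow> real \<Rightarrow> real \<Rightarrow> pt \<Rightarrow> pt \<Rightarrow> real" where
  "gmFy a b x y U V = - (U$1 * V$1 + U$2 * V$2) * (4*a*y) / (lamF a x y)^3
     + thFy a b x y U * thF a b x y V + thF a b x y U * thFy a b x y V"

lemma gm_F: "gm a b p U V = gmF a b (p$1) (p$2) U V"
  by (simp add: gm_def gmF_def theta_def thF_def lam_def lamF_def)

lemma lamF_x: "((\<lambda>t. lamF a t y) has_real_derivative 2*a*x) (at x)"
  unfolding lamF_def by (auto intro!: derivative_eq_intros)
lemma lamF_y: "((\<lambda>t. lamF a x t) has_real_derivative 2*a*y) (at y)"
  unfolding lamF_def by (auto intro!: derivative_eq_intros)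

lemma thF_x: assumes "lamF a x y \<noteq> 0"
  shows "((\<lambda>t. thF a b t y U) has_real_derivative thFx a b x y U) (at x)"
  unfolding thF_def
  apply (rule derivative_eq_intros refl lamF_x | simp add: assms)+
  using assms by (simp add: thFx_def field_simps power2_eq_square) 


lemma thF_y: assumes "lamF a x y \<noteq> 0"
  shows "((\<lambda>t. thF a b x t U) has_real_derivative thFy a b x y U) (at y)"
  unfolding thF_def
  apply (rule derivative_eq_intros refl lamF_y | simp add: assms)+
  using assms by (simp add: thFy_def field_simps power2_eq_square) 

lemma inv_l2_x: assumes "lamF a x y \<noteq> 0"
  shows "((\<lambda>t. 1 / (lamF a t y)^2) has_real_derivative - (4*a*x) / (lamF a x y)^3) (at x)"
  apply (rule derivative_eq_intros refl lamF_x | simp add: assms)+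
  using assms by (simp add: field_simps eval_nat_numeral)

lemma inv_l2_y: assumes "lamF a x y \<noteq> 0"
  shows "((\<lambda>t. 1 / (lamF a x t)^2) has_real_derivative - (4*a*y) / (lamF a x y)^3) (at y)"
  apply (rule derivative_eq_intros refl lamF_y | simp add: assms)+
  using assms by (simp add: field_simps eval_nat_numeral)

lemma gmF_x: assumes "lamF a x y \<noteq> 0"
  shows "((\<lambda>t. gmF a b t y U V) has_real_derivative gmFx a b x y U V) (at x)"
proof -
  have e: "(\<lambda>t. gmF a b t y U V) = (\<lambda>t. (U$1 * V$1 + U$2 * V$2) * (1 / (lamF a t y)^2) + thF a b t y U * thF a b t y V)"
    by (simp add: gmF_def fun_eq_iff)
  show ?thesis unfolding e
    by (rule DERIV_cong[OF DERIV_add[OF DERIV_cmult[OF inv_l2_x[OF assms]] DERIV_mult[OF thF_x[OF assms] thF_x[OF assms]]]])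
      (use assms in \<open>simp add: gmFx_def field_simps\<close>)
qed

lemma gmF_y: assumes "lamF a x y \<noteq> 0"
  shows "((\<lambda>t. gmF a b x t U V) has_real_derivative gmFy a b x y U V) (at y)"
proof -
  have e: "(\<lambda>t. gmF a b x t U V) = (\<lambda>t. (U$1 * V$1 + U$2 * V$2) * (1 / (lamF a x t)^2) + thF a b x t U * thF a b x t V)"
    by (simp add: gmF_def fun_eq_iff)
  show ?thesis unfolding e
    by (rule DERIV_cong[OF DERIV_add[OF DERIV_cmult[OF inv_l2_y[OF assms]] DERIV_mult[OF thF_y[OF assms] thF_y[OF assms]]]])
      (use assms in \<open>simp add: gmFy_def field_simps\<close>)
qed

lemma deriv_shift0: "deriv (\<lambda>h. G (h + c)) 0 = deriv G (c::real)"
  unfolding deriv_def using DERIV_shift[of G _ 0 c] by simp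

lemma pd_1: "pd (\<lambda>q. F (q$1) (q$2)) p 1 = deriv (\<lambda>t. F t (p$2)) (p$1)"
proof -
  have "(\<lambda>h. F ((p + h *\<^sub>R axis 1 1)$1) ((p + h *\<^sub>R axis 1 1)$2)) = (\<lambda>h. (\<lambda>t. F t (p$2)) (h + p$1))"
    by (simp add: axis_def add.commute)
  then have "pd (\<lambda>q. F (q$1) (q$2)) p 1 = deriv (\<lambda>h. (\<lambda>t. F t (p$2)) (h + p$1)) 0"
    unfolding pd_def by simp
  also have "\<dots> = deriv (\<lambda>t. F t (p$2)) (p$1)" by (rule deriv_shift0)
  finally show ?thesis .
qed

lemma pd_2: "pd (\<lambda>q. F (q$1) (q$2)) p 2 = deriv (\<lambda>t. F (p$1) t) (p$2)"
proof -
  have "(\<lambda>h. F ((p + h *\<^sub>R axis 2 1)$1) ((p + h *\<^sub>R axis 2 1)$2)) = (\<lambda>h. (\<lambda>t. F (p$1) t) (h + p$2))"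
    by (simp add: axis_def add.commute)
  then have "pd (\<lambda>q. F (q$1) (q$2)) p 2 = deriv (\<lambda>h. (\<lambda>t. F (p$1) t) (h + p$2)) 0"
    unfolding pd_def by simp
  also have "\<dots> = deriv (\<lambda>t. F (p$1) t) (p$2)" by (rule deriv_shift0)
  finally show ?thesis .
qed

lemma pd_3: "pd (\<lambda>q. F (q$1) (q$2)) p 3 = 0"
proof -
  have "(\<lambda>h. F ((p + h *\<^sub>R axis 3 1)$1) ((p + h *\<^sub>R axis 3 1)$2)) = (\<lambda>h. F (p$1) (p$2))"
    by (simp add: axis_def)
  then show ?thesis unfolding pd_def by simp
qed

lemma pd_gc: assumes "lam a p \<noteq> 0"
  shows "pd (gc a b i j) p l = (if l = 1 then gmFx a b (p$1) (p$2) (axis i 1) (axis j 1)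
     else if l = 2 then gmFy a b (p$1) (p$2) (axis i 1) (axis j 1) else 0)"
proof -
  have e: "gc a b i j = (\<lambda>q. gmF a b (q$1) (q$2) (axis i 1) (axis j 1))"
    by (simp add: fun_eq_iff gc_def gm_F)
  have lz: "lamF a (p$1) (p$2) \<noteq> 0" using assms by (simp add: lam_def lamF_def)
  have 1: "pd (gc a b i j) p 1 = gmFx a b (p$1) (p$2) (axis i 1) (axis j 1)"
    unfolding e pd_1[of "\<lambda>s t. gmF a b s t (axis i 1) (axis j 1)"] by (rule DERIV_imp_deriv[OF gmF_x[OF lz]])
  have 2: "pd (gc a b i j) p 2 = gmFy a b (p$1) (p$2) (axis i 1) (axis j 1)"
    unfolding e pd_2[of "\<lambda>s t. gmF a b s t (axis i 1) (axis j 1)"] by (rule DERIV_imp_deriv[OF gmF_y[OF lz]])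
  have 3: "pd (gc a b i j) p 3 = 0"
    unfolding e by (rule pd_3)
  show ?thesis using exhaust_3[of l] 1 2 3 by auto
qed


definition Ginv :: "real \<Rightarrow> real \<Rightarrow> pt \<Rightarrow> real^3^3" where
  "Ginv a b p = (let x = p$1; y = p$2; l = lam a p in
     vector [vector [l^2, 0, -(b/2)*y*l], vector [0, l^2, (b/2)*x*l],
             vector [-(b/2)*y*l, (b/2)*x*l, 1 + (b^2/4)*(x^2+y^2)]])"

lemma gmat_Ginv: assumes "lam a p \<noteq> 0" shows "gmat a b p ** Ginv a b p = mat 1"
  using assms
  apply (simp add: vec_eq_iff matrix_matrix_mult_def sum_3 gmat_def gc_def gm_def theta_def
      Ginv_def Let_def mat_def forall_3 axis_def)
  apply (simp add: divide_simps)
  apply (simp add: algebra_simps power2_eq_square)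
  done


lemma Ginv_gmat: assumes "lam a p \<noteq> 0" shows "Ginv a b p ** gmat a b p = mat 1"
  using gmat_Ginv[OF assms] matrix_left_right_inverse by blast

lemma matrix_inv_gmat: assumes "lam a p \<noteq> 0" shows "matrix_inv (gmat a b p) = Ginv a b p"
proof -
  let ?A = "gmat a b p" and ?B = "Ginv a b p"
  have "\<exists>A'. ?A ** A' = mat 1 \<and> A' ** ?A = mat 1" using gmat_Ginv[OF assms] Ginv_gmat[OF assms] by blast
  then have s: "?A ** matrix_inv ?A = mat 1 \<and> matrix_inv ?A ** ?A = mat 1"
    unfolding matrix_inv_def by (rule someI_ex)
  have "matrix_inv ?A = matrix_inv ?A ** (?A ** ?B)" using gmat_Ginv[OF assms] by (simp add: matrix_mul_rid)
  also have "\<dots> = (matrix_inv ?A ** ?A) ** ?B" by (simp add: matrix_mul_assoc)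
  also have "\<dots> = ?B" using s by (simp add: matrix_mul_lid)
  finally show ?thesis .
qed

definition GF :: "real \<Rightarrow> real \<Rightarrow> real \<Rightarrow> real \<Rightarrow> pt \<Rightarrow> pt \<Rightarrow> pt" where
  "GF a b x y X Y = vector [
   (-2*a*x*X$1*Y$1 + (b^2/4 - 2*a)*y*(X$1*Y$2+X$2*Y$1) + (2*a - b^2/2)*x*X$2*Y$2)/lamF a x y
      + (b/2)*(X$2*Y$3+X$3*Y$2),
   ((2*a - b^2/2)*y*X$1*Y$1 + (b^2/4 - 2*a)*x*(X$1*Y$2+X$2*Y$1) - 2*a*y*X$2*Y$2)/lamF a x y
      - (b/2)*(X$1*Y$3+X$3*Y$1),
   ((a*b - b^3/4)*x*y*(X$1*Y$1 - X$2*Y$2) + (b^3/8 - a*b/2)*(x^2-y^2)*(X$1*Y$2+X$2*Y$1))/(lamF a x y)^2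
      - (b^2/4)*(x*(X$1*Y$3+X$3*Y$1) + y*(X$2*Y$3+X$3*Y$2))/lamF a x y]"

lemma lamF_lam: "lamF a (p$1) (p$2) = lam a p"
  by (simp add: lamF_def lam_def)

definition CFv :: "real \<Rightarrow> real \<Rightarrow> real \<Rightarrow> real \<Rightarrow> pt \<Rightarrow> pt \<Rightarrow> pt" where
  "CFv a b x y X Y = vector [
   (X$1*Y$1*(-(1/2)*a*b^2*x*y^2 - 2*a*x) + (X$1*Y$2+X$2*Y$1)*((1/4)*a*b^2*x^2*y - (1/4)*a*b^2*y^3 - 2*a*y + (1/4)*b^2*y)
     + X$2*Y$2*((1/2)*a*b^2*x*y^2 + 2*a*x - (1/2)*b^2*x))/(lamF a x y)^3 + (b/2)*(X$2*Y$3+X$3*Y$2)/(lamF a x y)^2,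
   (X$1*Y$1*((1/2)*a*b^2*x^2*y + 2*a*y - (1/2)*b^2*y) + (X$1*Y$2+X$2*Y$1)*(-(1/4)*a*b^2*x^3 + (1/4)*a*b^2*x*y^2 - 2*a*x + (1/4)*b^2*x)
     + X$2*Y$2*(-(1/2)*a*b^2*x^2*y - 2*a*y))/(lamF a x y)^3 - (b/2)*(X$1*Y$3+X$3*Y$1)/(lamF a x y)^2,
   (X$1*Y$1*(-a*b*x*y) + (X$1*Y$2+X$2*Y$1)*((1/2)*a*b*x^2 - (1/2)*a*b*y^2) + X$2*Y$2*(a*b*x*y))/(lamF a x y)^2]"

lemma first_kind_all: assumes "lam a p \<noteq> 0"
  shows "\<forall>i j l. (pd (gc a b j l) p i + pd (gc a b i l) p j - pd (gc a b i j) p l)/2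
     = CFv a b (p$1) (p$2) (axis i 1) (axis j 1) $ l"
  unfolding forall_3
  apply (intro conjI)
  apply (simp add: pd_gc[OF assms] CFv_def gmFx_def gmFy_def
     thF_def thFx_def thFy_def lamF_lam axis_def;
     (use assms in \<open>simp add: divide_simps\<close>)?; (unfold lam_def)?; algebra?)+
  done


lemma chr_first: assumes "lam a p \<noteq> 0"
  shows "chr a b k i j p = (\<Sum>l\<in>UNIV. Ginv a b p $ k $ l * CFv a b (p$1) (p$2) (axis i 1) (axis j 1) $ l)"
proof -
  have "chr a b k i j p = (\<Sum>l\<in>UNIV. Ginv a b p $ k $ l * ((pd (gc a b j l) p i + pd (gc a b i l) p j - pd (gc a b i j) p l)/2))"
    unfolding chr_def matrix_inv_gmat[OF assms] sum_distrib_left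
    by (rule sum.cong) (auto simp: algebra_simps)
  then show ?thesis using first_kind_all[OF assms] by simp
qed


lemma chr_expl_all: assumes "lam a p \<noteq> 0"
  shows "\<forall>k i j. chr a b k i j p = GF a b (p$1) (p$2) (axis i 1) (axis j 1) $ k"
  unfolding forall_3 chr_first[OF assms]
  apply (intro conjI)
  apply (simp add: sum_3 Ginv_def Let_def GF_def CFv_def lamF_lam axis_def;
     (use assms in \<open>simp add: field_simps\<close>)?; algebra?)+
  done

lemma chr_expl: "lam a p \<noteq> 0 \<Longrightarrow> chr a b k i j p = GF a b (p$1) (p$2) (axis i 1) (axis j 1) $ k"
  using chr_expl_all by blast




lemma pd_local: assumes "open S" "p \<in> S" "\<forall>q\<in>S. f q = g q"
  shows "pd f p i = pd g p i"
proof -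
  have "((\<lambda>h. p + h *\<^sub>R axis i 1) \<longlongrightarrow> p + 0 *\<^sub>R axis i 1) (nhds (0::real))"
    by (intro tendsto_intros filterlim_ident)
  then have lim: "filterlim (\<lambda>h. p + h *\<^sub>R axis i 1) (nhds p) (nhds (0::real))" by simp
  have "\<forall>\<^sub>F q in nhds p. q \<in> S" using assms(1,2) by (rule eventually_nhds_in_open)
  then have "\<forall>\<^sub>F h in nhds (0::real). p + h *\<^sub>R axis i 1 \<in> S"
    using lim by (rule eventually_compose_filterlim)
  then have "\<forall>\<^sub>F h in nhds (0::real). f (p + h *\<^sub>R axis i 1) = g (p + h *\<^sub>R axis i 1)"
    by eventually_elim (use assms(3) in auto)
  then show ?thesis unfolding pd_def by (rule deriv_cong_ev) simp
qed

lemma open_lam: "open {q. lam a q \<noteq> 0}"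
  unfolding lam_def by (intro open_Collect_neq continuous_intros)

definition GFx :: "real \<Rightarrow> real \<Rightarrow> real \<Rightarrow> real \<Rightarrow> pt \<Rightarrow> pt \<Rightarrow> pt" where
  "GFx a b x y X Y = vector [
   (-2*a*X$1*Y$1 + (2*a - b^2/2)*X$2*Y$2)/lamF a x y
    - (-2*a*x*X$1*Y$1 + (b^2/4 - 2*a)*y*(X$1*Y$2+X$2*Y$1) + (2*a - b^2/2)*x*X$2*Y$2)*(2*a*x)/(lamF a x y)^2,
   ((b^2/4 - 2*a)*(X$1*Y$2+X$2*Y$1))/lamF a x y
    - ((2*a - b^2/2)*y*X$1*Y$1 + (b^2/4 - 2*a)*x*(X$1*Y$2+X$2*Y$1) - 2*a*y*X$2*Y$2)*(2*a*x)/(lamF a x y)^2,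
   ((a*b - b^3/4)*y*(X$1*Y$1 - X$2*Y$2) + (b^3/8 - a*b/2)*(2*x)*(X$1*Y$2+X$2*Y$1))/(lamF a x y)^2
    - ((a*b - b^3/4)*x*y*(X$1*Y$1 - X$2*Y$2) + (b^3/8 - a*b/2)*(x^2-y^2)*(X$1*Y$2+X$2*Y$1))*(4*a*x)/(lamF a x y)^3
    - (b^2/4)*(X$1*Y$3+X$3*Y$1)/lamF a x y
    + (b^2/4)*(x*(X$1*Y$3+X$3*Y$1) + y*(X$2*Y$3+X$3*Y$2))*(2*a*x)/(lamF a x y)^2]"

definition GFy :: "real \<Rightarrow> real \<Rightarrow> real \<Rightarrow> real \<Rightarrow> pt \<Rightarrow> pt \<Rightarrow> pt" where
  "GFy a b x y X Y = vector [
   ((b^2/4 - 2*a)*(X$1*Y$2+X$2*Y$1))/lamF a x y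
    - (-2*a*x*X$1*Y$1 + (b^2/4 - 2*a)*y*(X$1*Y$2+X$2*Y$1) + (2*a - b^2/2)*x*X$2*Y$2)*(2*a*y)/(lamF a x y)^2,
   ((2*a - b^2/2)*X$1*Y$1 - 2*a*X$2*Y$2)/lamF a x y
    - ((2*a - b^2/2)*y*X$1*Y$1 + (b^2/4 - 2*a)*x*(X$1*Y$2+X$2*Y$1) - 2*a*y*X$2*Y$2)*(2*a*y)/(lamF a x y)^2,
   ((a*b - b^3/4)*x*(X$1*Y$1 - X$2*Y$2) - (b^3/8 - a*b/2)*(2*y)*(X$1*Y$2+X$2*Y$1))/(lamF a x y)^2
    - ((a*b - b^3/4)*x*y*(X$1*Y$1 - X$2*Y$2) + (b^3/8 - a*b/2)*(x^2-y^2)*(X$1*Y$2+X$2*Y$1))*(4*a*y)/(lamF a x y)^3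
    - (b^2/4)*(X$2*Y$3+X$3*Y$2)/lamF a x y
    + (b^2/4)*(x*(X$1*Y$3+X$3*Y$1) + y*(X$2*Y$3+X$3*Y$2))*(2*a*y)/(lamF a x y)^2]"

lemma q1x: assumes "lamF a x y \<noteq> 0" "(N has_real_derivative N') (at x)"
  shows "((\<lambda>t. N t / lamF a t y) has_real_derivative N'/lamF a x y - N x * (2*a*x)/(lamF a x y)^2) (at x)"
  by (rule DERIV_cong[OF DERIV_divide[OF assms(2) lamF_x assms(1)]])
     (use assms in \<open>simp add: field_simps power2_eq_square\<close>)
lemma q1y: assumes "lamF a x y \<noteq> 0" "(N has_real_derivative N') (at y)"
  shows "((\<lambda>t. N t / lamF a x t) has_real_derivative N'/lamF a x y - N y * (2*a*y)/(lamF a x y)^2) (at y)"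
  by (rule DERIV_cong[OF DERIV_divide[OF assms(2) lamF_y assms(1)]])
     (use assms in \<open>simp add: field_simps power2_eq_square\<close>)
lemma q2x: assumes "lamF a x y \<noteq> 0" "(N has_real_derivative N') (at x)"
  shows "((\<lambda>t. N t / (lamF a t y)^2) has_real_derivative N'/(lamF a x y)^2 - N x * (4*a*x)/(lamF a x y)^3) (at x)"
proof -
  have d: "((\<lambda>t. (lamF a t y)^2) has_real_derivative 2 * lamF a x y * (2*a*x)) (at x)"
    using DERIV_mult[OF lamF_x[where a=a and x=x and y=y] lamF_x[where a=a and x=x and y=y]] by (simp add: power2_eq_square algebra_simps)
  show ?thesis
  by (rule DERIV_cong[OF DERIV_divide[OF assms(2) d]])
     (use assms in \<open>simp_all add: field_simps power2_eq_square power3_eq_cube\<close>)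
qed
lemma q2y: assumes "lamF a x y \<noteq> 0" "(N has_real_derivative N') (at y)"
  shows "((\<lambda>t. N t / (lamF a x t)^2) has_real_derivative N'/(lamF a x y)^2 - N y * (4*a*y)/(lamF a x y)^3) (at y)"
proof -
  have d: "((\<lambda>t. (lamF a x t)^2) has_real_derivative 2 * lamF a x y * (2*a*y)) (at y)"
    using DERIV_mult[OF lamF_y[where a=a and x=x and y=y] lamF_y[where a=a and x=x and y=y]] by (simp add: power2_eq_square algebra_simps)
  show ?thesis
  by (rule DERIV_cong[OF DERIV_divide[OF assms(2) d]])
     (use assms in \<open>simp_all add: field_simps power2_eq_square power3_eq_cube\<close>)
qed

lemma GF_x: assumes "lamF a x y \<noteq> 0"
  shows "\<forall>l. ((\<lambda>t. GF a b t y X Y $ l) has_real_derivative GFx a b x y X Y $ l) (at x)"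
  unfolding forall_3 GF_def GFx_def
  apply (simp only: vector_3)
  apply (intro conjI)
  apply (rule DERIV_cong, (rule q1x q2x assms derivative_eq_intros refl)+, simp add: algebra_simps)+
  done

lemma GF_y: assumes "lamF a x y \<noteq> 0"
  shows "\<forall>l. ((\<lambda>t. GF a b x t X Y $ l) has_real_derivative GFy a b x y X Y $ l) (at y)"
  unfolding forall_3 GF_def GFy_def
  apply (simp only: vector_3)
  apply (intro conjI)
  apply (rule DERIV_cong, (rule q1y q2y assms derivative_eq_intros refl)+, simp add: algebra_simps)+
  done


definition dG :: "real \<Rightarrow> real \<Rightarrow> pt \<Rightarrow> 3 \<Rightarrow> pt \<Rightarrow> pt \<Rightarrow> pt" where
  "dG a b p i X Y = (if i = 1 then GFx a b (p$1) (p$2) X Y else if i = 2 then GFy a b (p$1) (p$2) X Y else 0)"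

lemma pd_chr: assumes "lam a p \<noteq> 0"
  shows "pd (chr a b l j k) p i = dG a b p i (axis j 1) (axis k 1) $ l"
proof -
  have "pd (chr a b l j k) p i = pd (\<lambda>q. GF a b (q$1) (q$2) (axis j 1) (axis k 1) $ l) p i"
    by (rule pd_local[OF open_lam]) (use assms chr_expl in auto)
  also have "\<dots> = dG a b p i (axis j 1) (axis k 1) $ l"
  proof -
    have lz: "lamF a (p$1) (p$2) \<noteq> 0" using assms by (simp add: lamF_lam)
    have 1: "pd (\<lambda>q. GF a b (q$1) (q$2) (axis j 1) (axis k 1) $ l) p 1 = GFx a b (p$1) (p$2) (axis j 1) (axis k 1) $ l"
      unfolding pd_1[of "\<lambda>s t. GF a b s t (axis j 1) (axis k 1) $ l"]
      by (rule DERIV_imp_deriv[OF GF_x[OF lz, rule_format]])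
    have 2: "pd (\<lambda>q. GF a b (q$1) (q$2) (axis j 1) (axis k 1) $ l) p 2 = GFy a b (p$1) (p$2) (axis j 1) (axis k 1) $ l"
      unfolding pd_2[of "\<lambda>s t. GF a b s t (axis j 1) (axis k 1) $ l"]
      by (rule DERIV_imp_deriv[OF GF_y[OF lz, rule_format]])
    have 3: "pd (\<lambda>q. GF a b (q$1) (q$2) (axis j 1) (axis k 1) $ l) p 3 = 0"
      using pd_3[of "\<lambda>s t. GF a b s t (axis j 1) (axis k 1) $ l"] by simp
    show ?thesis using exhaust_3[of i] 1 2 3 by (auto simp: dG_def)
  qed
  finally show ?thesis .
qed

definition curvM :: "real \<Rightarrow> real \<Rightarrow> pt \<Rightarrow> pt \<Rightarrow> pt \<Rightarrow> pt \<Rightarrow> pt" where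
  "curvM a b p X Y Z = (4*a - 3*b^2/4) *\<^sub>R (gm a b p Y Z *\<^sub>R X - gm a b p X Z *\<^sub>R Y)
     + (4*a - b^2) *\<^sub>R ((theta a b p X * theta a b p Z) *\<^sub>R Y - (theta a b p Y * theta a b p Z) *\<^sub>R X
        + (gm a b p X Z * theta a b p Y) *\<^sub>R E3 - (gm a b p Y Z * theta a b p X) *\<^sub>R E3)"

lemma Rc_GF: assumes "lam a p \<noteq> 0"
  shows "Rc a b l k i j p = dG a b p i (axis j 1) (axis k 1) $ l - dG a b p j (axis i 1) (axis k 1) $ l
    + (\<Sum>m\<in>UNIV. GF a b (p$1) (p$2) (axis j 1) (axis k 1) $ m * GF a b (p$1) (p$2) (axis i 1) (axis m 1) $ l
          - GF a b (p$1) (p$2) (axis i 1) (axis k 1) $ m * GF a b (p$1) (p$2) (axis j 1) (axis m 1) $ l)"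
  unfolding Rc_def pd_chr[OF assms] chr_expl[OF assms] ..



lemma Rc_1112: assumes "lam a p \<noteq> 0"
  shows "Rc a b 1 1 1 2 p = curvM a b p (axis 1 1) (axis 2 1) (axis 1 1) $ 1"
  unfolding Rc_GF[OF assms]
  apply (simp add: sum_3 dG_def GF_def GFx_def GFy_def curvM_def gm_def theta_def E3_def lamF_lam axis_def)
  apply (simp add: field_simps assms)?
  apply (algebra | (unfold lam_def, algebra))?
  done

lemma Rc_1113: assumes "lam a p \<noteq> 0"
  shows "Rc a b 1 1 1 3 p = curvM a b p (axis 1 1) (axis 3 1) (axis 1 1) $ 1"
  unfolding Rc_GF[OF assms]
  apply (simp add: sum_3 dG_def GF_def GFx_def GFy_def curvM_def gm_def theta_def E3_def lamF_lam axis_def)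
  apply (simp add: field_simps assms)?
  apply (algebra | (unfold lam_def, algebra))?
  done

lemma Rc_1123: assumes "lam a p \<noteq> 0"
  shows "Rc a b 1 1 2 3 p = curvM a b p (axis 2 1) (axis 3 1) (axis 1 1) $ 1"
  unfolding Rc_GF[OF assms]
  apply (simp add: sum_3 dG_def GF_def GFx_def GFy_def curvM_def gm_def theta_def E3_def lamF_lam axis_def)
  apply (simp add: field_simps assms)?
  apply (algebra | (unfold lam_def, algebra))?
  done

lemma Rc_1212: assumes "lam a p \<noteq> 0"
  shows "Rc a b 1 2 1 2 p = curvM a b p (axis 1 1) (axis 2 1) (axis 2 1) $ 1"
  unfolding Rc_GF[OF assms]
  apply (simp add: sum_3 dG_def GF_def GFx_def GFy_def curvM_def gm_def theta_def E3_def lamF_lam axis_def)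
  apply (simp add: field_simps assms)?
  apply (algebra | (unfold lam_def, algebra))?
  done

lemma Rc_1213: assumes "lam a p \<noteq> 0"
  shows "Rc a b 1 2 1 3 p = curvM a b p (axis 1 1) (axis 3 1) (axis 2 1) $ 1"
  unfolding Rc_GF[OF assms]
  apply (simp add: sum_3 dG_def GF_def GFx_def GFy_def curvM_def gm_def theta_def E3_def lamF_lam axis_def)
  apply (simp add: field_simps assms)?
  apply (algebra | (unfold lam_def, algebra))?
  done

lemma Rc_1223: assumes "lam a p \<noteq> 0"
  shows "Rc a b 1 2 2 3 p = curvM a b p (axis 2 1) (axis 3 1) (axis 2 1) $ 1"
  unfolding Rc_GF[OF assms]
  apply (simp add: sum_3 dG_def GF_def GFx_def GFy_def curvM_def gm_def theta_def E3_def lamF_lam axis_def)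
  apply (simp add: field_simps assms)?
  apply (algebra | (unfold lam_def, algebra))?
  done

lemma Rc_1312: assumes "lam a p \<noteq> 0"
  shows "Rc a b 1 3 1 2 p = curvM a b p (axis 1 1) (axis 2 1) (axis 3 1) $ 1"
  unfolding Rc_GF[OF assms]
  apply (simp add: sum_3 dG_def GF_def GFx_def GFy_def curvM_def gm_def theta_def E3_def lamF_lam axis_def)
  apply (simp add: field_simps assms)?
  apply (algebra | (unfold lam_def, algebra))?
  done

lemma Rc_1313: assumes "lam a p \<noteq> 0"
  shows "Rc a b 1 3 1 3 p = curvM a b p (axis 1 1) (axis 3 1) (axis 3 1) $ 1"
  unfolding Rc_GF[OF assms]
  apply (simp add: sum_3 dG_def GF_def GFx_def GFy_def curvM_def gm_def theta_def E3_def lamF_lam axis_def)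
  apply (simp add: field_simps assms)?
  apply (algebra | (unfold lam_def, algebra))?
  done

lemma Rc_1323: assumes "lam a p \<noteq> 0"
  shows "Rc a b 1 3 2 3 p = curvM a b p (axis 2 1) (axis 3 1) (axis 3 1) $ 1"
  unfolding Rc_GF[OF assms]
  apply (simp add: sum_3 dG_def GF_def GFx_def GFy_def curvM_def gm_def theta_def E3_def lamF_lam axis_def)
  apply (simp add: field_simps assms)?
  apply (algebra | (unfold lam_def, algebra))?
  done

lemma Rc_2112: assumes "lam a p \<noteq> 0"
  shows "Rc a b 2 1 1 2 p = curvM a b p (axis 1 1) (axis 2 1) (axis 1 1) $ 2"
  unfolding Rc_GF[OF assms]
  apply (simp add: sum_3 dG_def GF_def GFx_def GFy_def curvM_def gm_def theta_def E3_def lamF_lam axis_def)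
  apply (simp add: field_simps assms)?
  apply (algebra | (unfold lam_def, algebra))?
  done

lemma Rc_2113: assumes "lam a p \<noteq> 0"
  shows "Rc a b 2 1 1 3 p = curvM a b p (axis 1 1) (axis 3 1) (axis 1 1) $ 2"
  unfolding Rc_GF[OF assms]
  apply (simp add: sum_3 dG_def GF_def GFx_def GFy_def curvM_def gm_def theta_def E3_def lamF_lam axis_def)
  apply (simp add: field_simps assms)?
  apply (algebra | (unfold lam_def, algebra))?
  done

lemma Rc_2123: assumes "lam a p \<noteq> 0"
  shows "Rc a b 2 1 2 3 p = curvM a b p (axis 2 1) (axis 3 1) (axis 1 1) $ 2"
  unfolding Rc_GF[OF assms]
  apply (simp add: sum_3 dG_def GF_def GFx_def GFy_def curvM_def gm_def theta_def E3_def lamF_lam axis_def)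
  apply (simp add: field_simps assms)?
  apply (algebra | (unfold lam_def, algebra))?
  done

lemma Rc_2212: assumes "lam a p \<noteq> 0"
  shows "Rc a b 2 2 1 2 p = curvM a b p (axis 1 1) (axis 2 1) (axis 2 1) $ 2"
  unfolding Rc_GF[OF assms]
  apply (simp add: sum_3 dG_def GF_def GFx_def GFy_def curvM_def gm_def theta_def E3_def lamF_lam axis_def)
  apply (simp add: field_simps assms)?
  apply (algebra | (unfold lam_def, algebra))?
  done

lemma Rc_2213: assumes "lam a p \<noteq> 0"
  shows "Rc a b 2 2 1 3 p = curvM a b p (axis 1 1) (axis 3 1) (axis 2 1) $ 2"
  unfolding Rc_GF[OF assms]
  apply (simp add: sum_3 dG_def GF_def GFx_def GFy_def curvM_def gm_def theta_def E3_def lamF_lam axis_def)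
  apply (simp add: field_simps assms)?
  apply (algebra | (unfold lam_def, algebra))?
  done

lemma Rc_2223: assumes "lam a p \<noteq> 0"
  shows "Rc a b 2 2 2 3 p = curvM a b p (axis 2 1) (axis 3 1) (axis 2 1) $ 2"
  unfolding Rc_GF[OF assms]
  apply (simp add: sum_3 dG_def GF_def GFx_def GFy_def curvM_def gm_def theta_def E3_def lamF_lam axis_def)
  apply (simp add: field_simps assms)?
  apply (algebra | (unfold lam_def, algebra))?
  done

lemma Rc_2312: assumes "lam a p \<noteq> 0"
  shows "Rc a b 2 3 1 2 p = curvM a b p (axis 1 1) (axis 2 1) (axis 3 1) $ 2"
  unfolding Rc_GF[OF assms]
  apply (simp add: sum_3 dG_def GF_def GFx_def GFy_def curvM_def gm_def theta_def E3_def lamF_lam axis_def)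
  apply (simp add: field_simps assms)?
  apply (algebra | (unfold lam_def, algebra))?
  done

lemma Rc_2313: assumes "lam a p \<noteq> 0"
  shows "Rc a b 2 3 1 3 p = curvM a b p (axis 1 1) (axis 3 1) (axis 3 1) $ 2"
  unfolding Rc_GF[OF assms]
  apply (simp add: sum_3 dG_def GF_def GFx_def GFy_def curvM_def gm_def theta_def E3_def lamF_lam axis_def)
  apply (simp add: field_simps assms)?
  apply (algebra | (unfold lam_def, algebra))?
  done

lemma Rc_2323: assumes "lam a p \<noteq> 0"
  shows "Rc a b 2 3 2 3 p = curvM a b p (axis 2 1) (axis 3 1) (axis 3 1) $ 2"
  unfolding Rc_GF[OF assms]
  apply (simp add: sum_3 dG_def GF_def GFx_def GFy_def curvM_def gm_def theta_def E3_def lamF_lam axis_def)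
  apply (simp add: field_simps assms)?
  apply (algebra | (unfold lam_def, algebra))?
  done

lemma Rc_3112: assumes "lam a p \<noteq> 0"
  shows "Rc a b 3 1 1 2 p = curvM a b p (axis 1 1) (axis 2 1) (axis 1 1) $ 3"
  unfolding Rc_GF[OF assms]
  apply (simp add: sum_3 dG_def GF_def GFx_def GFy_def curvM_def gm_def theta_def E3_def lamF_lam axis_def)
  apply (simp add: field_simps assms)?
  apply (algebra | (unfold lam_def, algebra))?
  done

lemma Rc_3113: assumes "lam a p \<noteq> 0"
  shows "Rc a b 3 1 1 3 p = curvM a b p (axis 1 1) (axis 3 1) (axis 1 1) $ 3"
  unfolding Rc_GF[OF assms]
  apply (simp add: sum_3 dG_def GF_def GFx_def GFy_def curvM_def gm_def theta_def E3_def lamF_lam axis_def)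
  apply (simp add: field_simps assms)?
  apply (algebra | (unfold lam_def, algebra))?
  done

lemma Rc_3123: assumes "lam a p \<noteq> 0"
  shows "Rc a b 3 1 2 3 p = curvM a b p (axis 2 1) (axis 3 1) (axis 1 1) $ 3"
  unfolding Rc_GF[OF assms]
  apply (simp add: sum_3 dG_def GF_def GFx_def GFy_def curvM_def gm_def theta_def E3_def lamF_lam axis_def)
  apply (simp add: field_simps assms)?
  apply (algebra | (unfold lam_def, algebra))?
  done

lemma Rc_3212: assumes "lam a p \<noteq> 0"
  shows "Rc a b 3 2 1 2 p = curvM a b p (axis 1 1) (axis 2 1) (axis 2 1) $ 3"
  unfolding Rc_GF[OF assms]
  apply (simp add: sum_3 dG_def GF_def GFx_def GFy_def curvM_def gm_def theta_def E3_def lamF_lam axis_def)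
  apply (simp add: field_simps assms)?
  apply (algebra | (unfold lam_def, algebra))?
  done

lemma Rc_3213: assumes "lam a p \<noteq> 0"
  shows "Rc a b 3 2 1 3 p = curvM a b p (axis 1 1) (axis 3 1) (axis 2 1) $ 3"
  unfolding Rc_GF[OF assms]
  apply (simp add: sum_3 dG_def GF_def GFx_def GFy_def curvM_def gm_def theta_def E3_def lamF_lam axis_def)
  apply (simp add: field_simps assms)?
  apply (algebra | (unfold lam_def, algebra))?
  done

lemma Rc_3223: assumes "lam a p \<noteq> 0"
  shows "Rc a b 3 2 2 3 p = curvM a b p (axis 2 1) (axis 3 1) (axis 2 1) $ 3"
  unfolding Rc_GF[OF assms]
  apply (simp add: sum_3 dG_def GF_def GFx_def GFy_def curvM_def gm_def theta_def E3_def lamF_lam axis_def)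
  apply (simp add: field_simps assms)?
  apply (algebra | (unfold lam_def, algebra))?
  done

lemma Rc_3312: assumes "lam a p \<noteq> 0"
  shows "Rc a b 3 3 1 2 p = curvM a b p (axis 1 1) (axis 2 1) (axis 3 1) $ 3"
  unfolding Rc_GF[OF assms]
  apply (simp add: sum_3 dG_def GF_def GFx_def GFy_def curvM_def gm_def theta_def E3_def lamF_lam axis_def)
  apply (simp add: field_simps assms)?
  apply (algebra | (unfold lam_def, algebra))?
  done

lemma Rc_3313: assumes "lam a p \<noteq> 0"
  shows "Rc a b 3 3 1 3 p = curvM a b p (axis 1 1) (axis 3 1) (axis 3 1) $ 3"
  unfolding Rc_GF[OF assms]
  apply (simp add: sum_3 dG_def GF_def GFx_def GFy_def curvM_def gm_def theta_def E3_def lamF_lam axis_def)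
  apply (simp add: field_simps assms)?
  apply (algebra | (unfold lam_def, algebra))?
  done

lemma Rc_3323: assumes "lam a p \<noteq> 0"
  shows "Rc a b 3 3 2 3 p = curvM a b p (axis 2 1) (axis 3 1) (axis 3 1) $ 3"
  unfolding Rc_GF[OF assms]
  apply (simp add: sum_3 dG_def GF_def GFx_def GFy_def curvM_def gm_def theta_def E3_def lamF_lam axis_def)
  apply (simp add: field_simps assms)?
  apply (algebra | (unfold lam_def, algebra))?
  done


lemma Rc_antisym: "Rc a b l k j i p = - Rc a b l k i j p"
  by (simp add: Rc_def sum_subtractf)
lemma Rc_diag: "Rc a b l k i i p = 0"
  by (simp add: Rc_def)
lemma curvM_antisym: "curvM a b p Y X Z = - curvM a b p X Y Z"
  by (simp add: curvM_def algebra_simps)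

lemma Rc_expl_all: assumes "lam a p \<noteq> 0"
  shows "\<forall>l k i j. Rc a b l k i j p = curvM a b p (axis i 1) (axis j 1) (axis k 1) $ l"
proof (intro allI)
  fix l k i j :: 3
  have d: "curvM a b p X X Z = 0" for X Z
    by (simp add: curvM_def)
  have A: "\<forall>l k. Rc a b l k 1 2 p = curvM a b p (axis 1 1) (axis 2 1) (axis k 1) $ l
     \<and> Rc a b l k 1 3 p = curvM a b p (axis 1 1) (axis 3 1) (axis k 1) $ l
     \<and> Rc a b l k 2 3 p = curvM a b p (axis 2 1) (axis 3 1) (axis k 1) $ l"
    unfolding forall_3 by (simp only: Rc_1112[OF assms] Rc_1113[OF assms] Rc_1123[OF assms] Rc_1212[OF assms] Rc_1213[OF assms] Rc_1223[OF assms] Rc_1312[OF assms] Rc_1313[OF assms] Rc_1323[OF assms] Rc_2112[OF assms] Rc_2113[OF assms] Rc_2123[OF assms] Rc_2212[OF assms] Rc_2213[OF assms] Rc_2223[OF assms] Rc_2312[OF assms] Rc_2313[OF assms] Rc_2323[OF assms] Rc_3112[OF assms] Rc_3113[OF assms] Rc_3123[OF assms] Rc_3212[OF assms] Rc_3213[OF assms] Rc_3223[OF assms] Rc_3312[OF assms] Rc_3313[OF assms] Rc_3323[OF assms])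
  have B: "Rc a b l k 2 1 p = - Rc a b l k 1 2 p" "Rc a b l k 3 1 p = - Rc a b l k 1 3 p"
      "Rc a b l k 3 2 p = - Rc a b l k 2 3 p" for l k
    by (rule Rc_antisym)+
  have C: "curvM a b p (axis 2 1) (axis 1 1) Z = - curvM a b p (axis 1 1) (axis 2 1) Z"
      "curvM a b p (axis 3 1) (axis 1 1) Z = - curvM a b p (axis 1 1) (axis 3 1) Z"
      "curvM a b p (axis 3 1) (axis 2 1) Z = - curvM a b p (axis 2 1) (axis 3 1) Z" for Z
    by (rule curvM_antisym)+
  show "Rc a b l k i j p = curvM a b p (axis i 1) (axis j 1) (axis k 1) $ l"
    using exhaust_3[of i] exhaust_3[of j] A
    by (elim disjE; simp only: Rc_diag d B C; simp)
qed




lemma theta_add: "theta a b p (U + V) = theta a b p U + theta a b p V"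
  by (simp add: theta_def add_divide_distrib[symmetric] algebra_simps)
lemma theta_scale: "theta a b p (r *\<^sub>R U) = r * theta a b p U"
  by (simp add: theta_def algebra_simps)
lemma theta_minus: "theta a b p (- U) = - theta a b p U"
  using theta_scale[of a b p "-1" U] by simp
lemma theta_diff: "theta a b p (U - V) = theta a b p U - theta a b p V"
  using theta_add[of a b p U "-V"] theta_minus[of a b p V] by simp
lemma theta_zero: "theta a b p 0 = 0"
  by (simp add: theta_def)
lemma theta_E3: "theta a b p E3 = 1"
  by (simp add: theta_def E3_def axis_def)

lemma gm_sym: "gm a b p U V = gm a b p V U"
  by (simp add: gm_def algebra_simps)
lemma gm_add1: "gm a b p (U + V) W = gm a b p U W + gm a b p V W"
  by (simp add: gm_def theta_add add_divide_distrib[symmetric] algebra_simps)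
lemma gm_add2: "gm a b p W (U + V) = gm a b p W U + gm a b p W V"
  by (simp add: gm_def theta_add add_divide_distrib[symmetric] algebra_simps)
lemma gm_scale1: "gm a b p (r *\<^sub>R U) W = r * gm a b p U W"
  by (simp add: gm_def theta_scale algebra_simps)
lemma gm_scale2: "gm a b p W (r *\<^sub>R U) = r * gm a b p W U"
  by (simp add: gm_def theta_scale algebra_simps)
lemma gm_minus1: "gm a b p (- U) W = - gm a b p U W"
  using gm_scale1[of a b p "-1" U W] by simp
lemma gm_minus2: "gm a b p W (- U) = - gm a b p W U"
  using gm_scale2[of a b p W "-1" U] by simp
lemma gm_diff1: "gm a b p (U - V) W = gm a b p U W - gm a b p V W"
  using gm_add1[of a b p U "-V" W] gm_minus1[of a b p V W] by simp
lemma gm_diff2: "gm a b p W (U - V) = gm a b p W U - gm a b p W V"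
  using gm_add2[of a b p W U "-V"] gm_minus2[of a b p W V] by simp
lemma gm_zero1: "gm a b p 0 W = 0" by (simp add: gm_def theta_zero)
lemma gm_zero2: "gm a b p W 0 = 0" by (simp add: gm_def theta_zero)
lemma gm_E3: "gm a b p U E3 = theta a b p U"
  unfolding gm_def theta_E3 by (simp add: E3_def axis_def)
lemma gm_E3': "gm a b p E3 U = theta a b p U"
  unfolding gm_def theta_E3 by (simp add: E3_def axis_def)

lemmas gm_lin = gm_add1 gm_add2 gm_diff1 gm_diff2 gm_scale1 gm_scale2 gm_minus1 gm_minus2 gm_zero1 gm_zero2

lemma conn_add: "conn a b p X (U + V) = conn a b p X U + conn a b p X V"
  by (simp add: conn_def vec_eq_iff sum.distrib[symmetric] algebra_simps)
lemma conn_scale: "conn a b p X (r *\<^sub>R U) = r *\<^sub>R conn a b p X U"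
  by (simp add: conn_def vec_eq_iff sum_distrib_left algebra_simps)

lemma conn_E3: assumes "lam a p \<noteq> 0"
  shows "conn a b p X E3 = vector [(b/2) * X$2, -(b/2) * X$1, -(b^2/4) * (p$1 * X$1 + p$2 * X$2) / lam a p]"
  unfolding vec_eq_iff forall_3
  using assms by (simp add: conn_def sum_3 chr_expl[OF assms] GF_def E3_def axis_def lamF_lam) (simp add: field_simps)

lemma conn_E3E3: assumes "lam a p \<noteq> 0"
  shows "conn a b p E3 E3 = 0"
  unfolding vec_eq_iff forall_3
  by (simp add: conn_def sum_3 chr_expl[OF assms] GF_def E3_def axis_def)

lemma h_formula: assumes "lam a p \<noteq> 0"
  shows "gm a b p V (conn a b p T E3) = (b/2) * (T$2 * V$1 - T$1 * V$2) / (lam a p)^2"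
  unfolding conn_E3[OF assms]
  using assms by (simp add: gm_def theta_def field_simps) algebra

lemma conn_GF: assumes "lam a p \<noteq> 0"
  shows "conn a b p X Y = GF a b (p$1) (p$2) X Y"
  unfolding vec_eq_iff forall_3
  apply (simp add: conn_def sum_3 chr_expl[OF assms] GF_def axis_def lamF_lam)
  using assms by (simp add: field_simps)

lemma theta_GF: assumes "lam a p \<noteq> 0"
  shows "theta a b p (GF a b (p$1) (p$2) T V) = (a*b/2) * (((p$1)^2 - (p$2)^2) * (T$1*V$2 + T$2*V$1)
      - 2 * p$1 * p$2 * (T$1*V$1 - T$2*V$2)) / (lam a p)^2"
  apply (simp add: theta_def GF_def lamF_lam)
  apply (simp add: field_simps assms)
  apply algebra
  done

lemma theta_conn: assumes "lam a p \<noteq> 0"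
  shows "theta a b p (conn a b p T V) + gm a b p V (conn a b p T E3)
    = (b/2) * ((T$2 * V$1 - T$1 * V$2) / lam a p
        - (p$2 * V$1 - p$1 * V$2) * (2*a*(p$1 * T$1 + p$2 * T$2)) / (lam a p)^2)"
  unfolding h_formula[OF assms] unfolding conn_GF[OF assms] theta_GF[OF assms]
  apply (simp add: field_simps assms)
  apply (unfold lam_def)
  apply algebra
  done




lemma comp_deriv: assumes "f differentiable (at s)"
  shows "((\<lambda>t. f t $ i) has_real_derivative (vector_derivative f (at s)) $ i) (at s)"
proof -
  have "(f has_derivative (\<lambda>x. x *\<^sub>R vector_derivative f (at s))) (at s)"
    using vector_derivative_works[THEN iffD1, OF assms] unfolding has_vector_derivative_def .
  from bounded_linear.has_derivative[OF bounded_linear_vec_nth this]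
  have "((\<lambda>t. f t $ i) has_derivative (\<lambda>x. (x *\<^sub>R vector_derivative f (at s)) $ i)) (at s)" .
  moreover have "(\<lambda>x. (x *\<^sub>R vector_derivative f (at s)) $ i) = (*) (vector_derivative f (at s) $ i)"
    by (simp add: fun_eq_iff mult.commute)
  ultimately show ?thesis unfolding has_field_derivative_def by simp
qed

lemma eta_deriv:
  assumes c: "c differentiable (at s)" and V: "V differentiable (at s)" and l: "lam a (c s) \<noteq> 0"
  shows "((\<lambda>t. theta a b (c t) (V t)) has_real_derivative
     theta a b (c s) (covd a b c V s) + gm a b (c s) (V s) (conn a b (c s) (vel c s) E3)) (at s)"
proof -
  let ?T = "vel c s" and ?W = "vector_derivative V (at s)"
  have c1: "((\<lambda>t. c t $ 1) has_real_derivative ?T $ 1) (at s)"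
   and c2: "((\<lambda>t. c t $ 2) has_real_derivative ?T $ 2) (at s)"
    using comp_deriv[OF c] unfolding vel_def by auto
  have v1: "((\<lambda>t. V t $ 1) has_real_derivative ?W $ 1) (at s)"
   and v2: "((\<lambda>t. V t $ 2) has_real_derivative ?W $ 2) (at s)"
   and v3: "((\<lambda>t. V t $ 3) has_real_derivative ?W $ 3) (at s)"
    using comp_deriv[OF V] by auto
  have e: "(\<lambda>t. theta a b (c t) (V t)) = (\<lambda>t. V t $ 3 + (b/2) * (c t $ 2 * V t $ 1 - c t $ 1 * V t $ 2)
      / lam a (c t))"
    by (simp add: fun_eq_iff theta_def)
  have dl: "((\<lambda>t. lam a (c t)) has_real_derivative 2*a*(c s $ 1 * ?T $ 1 + c s $ 2 * ?T $ 2)) (at s)"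
    unfolding lam_def
    by (rule DERIV_cong, (rule derivative_eq_intros c1 c2 refl)+) (simp add: algebra_simps)
  have D: "((\<lambda>t. theta a b (c t) (V t)) has_real_derivative
     ?W $ 3 + (b/2) * ((?T$2 * V s $ 1 + c s $ 2 * ?W $ 1 - ?T $ 1 * V s $ 2 - c s $ 1 * ?W $ 2) / lam a (c s)
        - (c s $ 2 * V s $ 1 - c s $ 1 * V s $ 2) * (2*a*(c s $ 1 * ?T $ 1 + c s $ 2 * ?T $ 2)) / (lam a (c s))^2)) (at s)"
    unfolding e
    apply (rule DERIV_cong)
     apply (rule derivative_eq_intros c1 c2 v1 v2 v3 refl l dl)+
    using l by (simp add: field_simps power2_eq_square)
  have "theta a b (c s) (covd a b c V s) + gm a b (c s) (V s) (conn a b (c s) ?T E3)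
      = theta a b (c s) ?W + (theta a b (c s) (conn a b (c s) ?T (V s)) + gm a b (c s) (V s) (conn a b (c s) ?T E3))"
    by (simp add: covd_def theta_add)
  also have "\<dots> = ?W $ 3 + (b/2) * ((?T$2 * V s $ 1 + c s $ 2 * ?W $ 1 - ?T $ 1 * V s $ 2 - c s $ 1 * ?W $ 2) / lam a (c s)
        - (c s $ 2 * V s $ 1 - c s $ 1 * V s $ 2) * (2*a*(c s $ 1 * ?T $ 1 + c s $ 2 * ?T $ 2)) / (lam a (c s))^2)"
    unfolding theta_conn[OF l] using l by (simp add: theta_def field_simps)
  finally show ?thesis using D by simp
qed

lemma covd_local: assumes "open I" "s \<in> I" "\<forall>t\<in>I. V t = W t"
  shows "covd a b c V s = covd a b c W s"
proof -
  have "\<forall>\<^sub>F t in nhds s. t \<in> I" using assms(1,2) by (rule eventually_nhds_in_open)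
  then have "\<forall>\<^sub>F t in nhds s. t \<in> UNIV \<longrightarrow> V t = W t" by eventually_elim (use assms(3) in auto)
  then have "vector_derivative V (at s within UNIV) = vector_derivative W (at s within UNIV)"
    by (rule vector_derivative_cong_eq) auto
  then show ?thesis using assms(2,3) by (simp add: covd_def)
qed

lemma covd_comb: assumes "open I" "s \<in> I" "\<forall>t\<in>I. V t = \<alpha> *\<^sub>R X t + \<beta> *\<^sub>R Y t"
   and "X differentiable (at s)" "Y differentiable (at s)"
  shows "covd a b c V s = \<alpha> *\<^sub>R covd a b c X s + \<beta> *\<^sub>R covd a b c Y s"
proof -
  have "covd a b c V s = covd a b c (\<lambda>t. \<alpha> *\<^sub>R X t + \<beta> *\<^sub>R Y t) s"
    by (rule covd_local[OF assms(1-3)])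
  also have "\<dots> = \<alpha> *\<^sub>R covd a b c X s + \<beta> *\<^sub>R covd a b c Y s"
  proof -
    have "((\<lambda>t. \<alpha> *\<^sub>R X t + \<beta> *\<^sub>R Y t) has_vector_derivative
        \<alpha> *\<^sub>R vector_derivative X (at s) + \<beta> *\<^sub>R vector_derivative Y (at s)) (at s)"
      using has_vector_derivative_add[OF
          has_vector_derivative_scaleR[OF DERIV_const[of \<alpha>] vector_derivative_works[THEN iffD1, OF assms(4)]]
          has_vector_derivative_scaleR[OF DERIV_const[of \<beta>] vector_derivative_works[THEN iffD1, OF assms(5)]]]
      by simp
    then have "vector_derivative (\<lambda>t. \<alpha> *\<^sub>R X t + \<beta> *\<^sub>R Y t) (at s) = 
        \<alpha> *\<^sub>R vector_derivative X (at s) + \<beta> *\<^sub>R vector_derivative Y (at s)"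
      by (rule vector_derivative_at)
    then show ?thesis by (simp add: covd_def conn_add conn_scale algebra_simps)
  qed
  finally show ?thesis .
qed

lemma covdn_Suc: "covdn a b (Suc n) c V = covd a b c (covdn a b n c V)"
  by (simp add: covdn_def)


lemma euclid_complete:
  fixes u v w :: "real^3"
  assumes "u$1 * u$1 + u$2 * u$2 + u$3 * u$3 = 1" "v$1 * v$1 + v$2 * v$2 + v$3 * v$3 = 1" "w$1 * w$1 + w$2 * w$2 + w$3 * w$3 = 1"
    "u$1 * v$1 + u$2 * v$2 + u$3 * v$3 = 0" "u$1 * w$1 + u$2 * w$2 + u$3 * w$3 = 0" "v$1 * w$1 + v$2 * w$2 + v$3 * w$3 = 0"
  shows "u$3 * u$3 + v$3 * v$3 + w$3 * w$3 = 1"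
proof -
  define M :: "real^3^3" where "M = vector [u, v, w]"
  have "M **  transpose M = mat 1"
    using assms unfolding M_def
    by (simp add: vec_eq_iff matrix_matrix_mult_def transpose_def mat_def forall_3 sum_3 algebra_simps)
  then have "transpose M **  M = mat 1" using matrix_left_right_inverse by blast
  then have "(transpose M **  M) $ 3 $ 3 = 1" by (simp add: mat_def)
  then show ?thesis unfolding M_def by (simp add: matrix_matrix_mult_def transpose_def sum_3)
qed

definition Pc :: "real \<Rightarrow> real \<Rightarrow> pt \<Rightarrow> pt \<Rightarrow> pt" where
  "Pc a b p U = vector [U$1 / lam a p, U$2 / lam a p, theta a b p U]"

lemma gm_Pc: "gm a b p U V = Pc a b p U $ 1 * Pc a b p V $ 1 + Pc a b p U $ 2 * Pc a b p V $ 2 + Pc a b p U $ 3 * Pc a b p V $ 3"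
  by (simp add: gm_def Pc_def power2_eq_square add_divide_distrib)

lemma frame_facts:
  assumes l: "lam a p \<noteq> 0"
    and o: "gm a b p T T = 1" "gm a b p N N = 1" "gm a b p B B = 1"
       "gm a b p T N = 0" "gm a b p T B = 0" "gm a b p N B = 0"
  shows "(theta a b p T)^2 + (theta a b p N)^2 + (theta a b p B)^2 = 1"
    and "(gm a b p B (conn a b p T E3))^2 = (b^2/4) * (1 - (theta a b p T)^2 - (theta a b p B)^2)"
proof -
  let ?t = "Pc a b p T" and ?n = "Pc a b p N" and ?b = "Pc a b p B"
  have c: "?t$3*?t$3 + ?n$3*?n$3 + ?b$3*?b$3 = 1"
    by (rule euclid_complete) (use o in \<open>simp_all add: gm_Pc\<close>)
  then show "(theta a b p T)^2 + (theta a b p N)^2 + (theta a b p B)^2 = 1"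
    by (simp add: Pc_def power2_eq_square)
  have h: "gm a b p B (conn a b p T E3) = (b/2) * (?t$2 * ?b$1 - ?t$1 * ?b$2)"
    unfolding h_formula[OF l] using l by (simp add: Pc_def field_simps power2_eq_square)
  have tt: "?t$1*?t$1 + ?t$2*?t$2 + ?t$3*?t$3 = 1" and bb: "?b$1*?b$1 + ?b$2*?b$2 + ?b$3*?b$3 = 1"
    and tb: "?t$1*?b$1 + ?t$2*?b$2 + ?t$3*?b$3 = 0"
    using o by (simp_all add: gm_Pc)
  have E: "(?t$2 * ?b$1 - ?t$1 * ?b$2)^2 = 1 - ?t$3*?t$3 - ?b$3*?b$3"
    using tt bb tb by algebra
  have t3: "?t$3 = theta a b p T" and b3: "?b$3 = theta a b p B" by (simp_all add: Pc_def)
  have "(gm a b p B (conn a b p T E3))^2 = (b^2/4) * (?t$2 * ?b$1 - ?t$1 * ?b$2)^2"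
    unfolding h power_mult_distrib by (simp add: power_divide)
  also have "\<dots> = (b^2/4) * (1 - ?t$3*?t$3 - ?b$3*?b$3)" using E by simp
  finally show "(gm a b p B (conn a b p T E3))^2 = (b^2/4) * (1 - (theta a b p T)^2 - (theta a b p B)^2)"
    unfolding t3 b3 by (simp add: power2_eq_square)
qed




lemma gm_expand: assumes "lam a p \<noteq> 0"
  shows "gm a b p Y Z = (\<Sum>j\<in>UNIV. \<Sum>k\<in>UNIV. Y$j * Z$k * gm a b p (axis j 1) (axis k 1))"
  by (simp add: gm_def theta_def sum_3 axis_def field_simps assms)

lemma theta_expand: assumes "lam a p \<noteq> 0"
  shows "theta a b p X = (\<Sum>i\<in>UNIV. X$i * theta a b p (axis i 1))"
  by (simp add: theta_def sum_3 axis_def field_simps assms)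

lemma curv_eq: assumes "lam a p \<noteq> 0"
  shows "curv a b p X Y Z = curvM a b p X Y Z"
proof -
  have R: "\<And>l k i j. Rc a b l k i j p = curvM a b p (axis i 1) (axis j 1) (axis k 1) $ l"
    using Rc_expl_all[OF assms] by blast
  have YZ: "gm a b p Y Z = (\<Sum>j\<in>UNIV. \<Sum>k\<in>UNIV. Y$j * Z$k * gm a b p (axis j 1) (axis k 1))"
   and XZ: "gm a b p X Z = (\<Sum>j\<in>UNIV. \<Sum>k\<in>UNIV. X$j * Z$k * gm a b p (axis j 1) (axis k 1))"
   and tX: "theta a b p X = (\<Sum>i\<in>UNIV. X$i * theta a b p (axis i 1))"
   and tY: "theta a b p Y = (\<Sum>i\<in>UNIV. Y$i * theta a b p (axis i 1))"
   and tZ: "theta a b p Z = (\<Sum>i\<in>UNIV. Z$i * theta a b p (axis i 1))"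
    using gm_expand[OF assms] theta_expand[OF assms] by blast+
  show ?thesis
    unfolding curv_def R curvM_def[of a b p X Y Z] YZ XZ tX tY tZ vec_eq_iff forall_3
    by (simp add: curvM_def sum_3 axis_def E3_def algebra_simps)
qed




lemma lam_shift: "lam a (p - t *\<^sub>R E3) = lam a p"
  by (simp add: lam_def E3_def axis_def)
lemma gm_shift: "gm a b (p - t *\<^sub>R E3) = gm a b p"
  by (simp add: fun_eq_iff gm_def theta_def lam_shift) (simp add: E3_def axis_def)

lemma h_self: "lam a p \<noteq> 0 \<Longrightarrow> gm a b p T (conn a b p T E3) = 0"
  by (simp add: h_formula)

lemma gm_curvM: "gm a b p (curvM a b p X Y Z) W =
   (4*a - 3*b^2/4) * (gm a b p Y Z * gm a b p X W - gm a b p X Z * gm a b p Y W)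
   + (4*a - b^2) * (theta a b p X * theta a b p Z * gm a b p Y W - theta a b p Y * theta a b p Z * gm a b p X W
      + gm a b p X Z * theta a b p Y * theta a b p W - gm a b p Y Z * theta a b p X * theta a b p W)"
  by (simp add: curvM_def gm_lin gm_E3' algebra_simps)

lemma scal_eqs:
  fixes \<kappa> \<tau> S eT eN eB :: real
  assumes o: "gm a b p T T = 1" "gm a b p N N = 1" "gm a b p B B = 1"
       "gm a b p T N = 0" "gm a b p T B = 0" "gm a b p N B = 0"
    and eT: "theta a b p T = eT" and eN: "theta a b p N = eN" and eB: "theta a b p B = eB"
    and S: "S = \<kappa>^2 + \<tau>^2" and k: "\<kappa> \<noteq> 0"
    and E: "(\<kappa> * S^2) *\<^sub>R N + curvM a b p ((- \<kappa> * S) *\<^sub>R N) T T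
         - curvM a b p ((- (\<kappa>^2)) *\<^sub>R T + (\<kappa> * \<tau>) *\<^sub>R B) (\<kappa> *\<^sub>R N) T = 0"
  shows "(4*a - b^2) * eN * ((S + \<kappa>^2) * eB + \<kappa> * \<tau> * eT) = 0"
    and "S^2 - (S + \<kappa>^2) * ((4*a - 3*b^2/4) - (4*a - b^2) * (eT^2 + eN^2)) - \<kappa> * \<tau> * (4*a - b^2) * eT * eB = 0"
proof -
  have o2: "gm a b p N T = 0" "gm a b p B T = 0" "gm a b p B N = 0"
    using o gm_sym by metis+
  have gB: "gm a b p ((\<kappa> * S^2) *\<^sub>R N) B + gm a b p (curvM a b p ((- \<kappa> * S) *\<^sub>R N) T T) B
         - gm a b p (curvM a b p ((- (\<kappa>^2)) *\<^sub>R T + (\<kappa> * \<tau>) *\<^sub>R B) (\<kappa> *\<^sub>R N) T) B = 0"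
    using arg_cong[OF E, of "\<lambda>v. gm a b p v B"] by (simp only: gm_add1 gm_diff1 gm_zero1)
  have gN: "gm a b p ((\<kappa> * S^2) *\<^sub>R N) N + gm a b p (curvM a b p ((- \<kappa> * S) *\<^sub>R N) T T) N
         - gm a b p (curvM a b p ((- (\<kappa>^2)) *\<^sub>R T + (\<kappa> * \<tau>) *\<^sub>R B) (\<kappa> *\<^sub>R N) T) N = 0"
    using arg_cong[OF E, of "\<lambda>v. gm a b p v N"] by (simp only: gm_add1 gm_diff1 gm_zero1)
  note simps = gm_curvM gm_add1 gm_scale1 gm_scale2 o o2 theta_add theta_scale eT eN eB
  from gB have "\<kappa> * ((4*a - b^2) * eN * ((S + \<kappa>^2) * eB + \<kappa> * \<tau> * eT)) = 0"
    by (simp only: simps) (simp add: algebra_simps power2_eq_square power3_eq_cube)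
  then show "(4*a - b^2) * eN * ((S + \<kappa>^2) * eB + \<kappa> * \<tau> * eT) = 0" using k by simp
  from gN have "\<kappa> * (S^2 - (S + \<kappa>^2) * ((4*a - 3*b^2/4) - (4*a - b^2) * (eT^2 + eN^2)) - \<kappa> * \<tau> * (4*a - b^2) * eT * eB) = 0"
    by (simp only: simps) algebra
  then show "S^2 - (S + \<kappa>^2) * ((4*a - 3*b^2/4) - (4*a - b^2) * (eT^2 + eN^2)) - \<kappa> * \<tau> * (4*a - b^2) * eT * eB = 0"
    using k by simp
qed


lemma final_alg:
  fixes \<kappa> \<tau> S Q eT eN eB h a b :: real
  assumes k: "\<kappa> > 0" and S: "S = \<kappa>^2 + \<tau>^2" and Q: "Q = S + \<kappa>^2"
    and i: "eT^2 + eN^2 + eB^2 = 1"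
    and Bc: "Q * eB + \<kappa> * \<tau> * eT = 0"
    and Nc: "S^2 - Q * ((4*a - 3*b^2/4) - (4*a - b^2) * (eT^2 + eN^2)) - \<kappa> * \<tau> * (4*a - b^2) * eT * eB = 0"
    and iv: "Q * (- \<tau> * eN + h) + \<kappa> * \<tau> * (\<kappa> * eN) = 0"
    and v: "h^2 = (b^2/4) * (1 - eT^2 - eB^2)"
    and nz: "eN \<noteq> 0"
  shows False
proof -
  have S2: "S^2 = Q * b^2 / 4" using Nc Bc i by algebra
  have hq: "Q * h = \<tau> * S * eN" using iv S Q by algebra
  have h2: "h^2 = (b^2/4) * eN^2" using v i by algebra
  have e1: "Q^2 * (b^2/4) * eN^2 = \<tau>^2 * S^2 * eN^2" using hq h2 by algebra
  have e2: "Q^2 * (b^2/4) = \<tau>^2 * S^2" using e1 nz by simp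
  have e3: "Q * b^2 * (Q - \<tau>^2) = 0" using e2 S2 by algebra
  have Qp: "Q > 0" and Qt: "Q - \<tau>^2 > 0" using k S Q by (auto intro: add_pos_nonneg)
  have "b^2 = 0" using e3 Qp Qt by simp
  then have "S^2 = 0" using S2 by simp
  then have "S = 0" by simp
  moreover have "S > 0" using k S by (simp add: add_pos_nonneg)
  ultimately show False by simp
qed




lemma sc1: "\<alpha> *\<^sub>R (\<beta> *\<^sub>R X) + \<gamma> *\<^sub>R (\<delta> *\<^sub>R X) = (\<alpha>*\<beta> + \<gamma>*\<delta>) *\<^sub>R (X::'a::real_vector)"
  by (simp add: scaleR_add_left)
lemma sc2: "\<alpha> *\<^sub>R (\<beta> *\<^sub>R X + \<delta> *\<^sub>R Y) + 0 *\<^sub>R Z = (\<alpha>*\<beta>) *\<^sub>R X + (\<alpha>*\<delta>) *\<^sub>R (Y::'a::real_vector)"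
  by (simp add: scaleR_add_right)

lemma chain_lin: assumes "G differentiable (at (k*u))"
  shows "((\<lambda>u. c *\<^sub>R G (k*u) - w) has_vector_derivative (c*k) *\<^sub>R vel G (k*u)) (at u)"
proof -
  have 1: "((\<lambda>u. k*u) has_vector_derivative k) (at u)"
    using has_vector_derivative_mult_right[OF has_vector_derivative_id, of k "at u"] by simp
  have 2: "(G has_vector_derivative vel G (k*u)) (at (k*u))"
    using vector_derivative_works[THEN iffD1, OF assms] unfolding vel_def .
  have "((G \<circ> (\<lambda>u. k*u)) has_vector_derivative k *\<^sub>R vel G (k*u)) (at u)"
    using vector_diff_chain_at[OF 1 2] by simp
  then have "((\<lambda>u. G (k*u)) has_vector_derivative k *\<^sub>R vel G (k*u)) (at u)" by (simp add: o_def)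
  from has_vector_derivative_diff[OF has_vector_derivative_scaleR[OF DERIV_const[of c] this] has_vector_derivative_const[of w]]
  show ?thesis by simp
qed

theorem corollary4p8:
  fixes a b \<kappa> \<tau> :: real and I :: "real set" and \<gamma> N B :: "real \<Rightarrow> real^3"
  assumes "4 * a \<noteq> b^2"
    and "open_interval I"
    and "arclength_curve a b I \<gamma>"
    and "triharmonic a b I \<gamma>"
    and "frenet_helix a b I \<gamma> \<kappa> \<tau> N B"
    and "\<tau> \<noteq> 0"
  shows "\<exists>J al. hopf_generator a b J al \<and> geodesic_of_hopf_cylinder a b I \<gamma> J al"
proof -
  have C: "4*a - b^2 \<noteq> 0" using assms(1) by simp
  from assms(2) have Iopen: "open I" and Ine: "I \<noteq> {}" and Iint: "is_interval I"
    by (auto simp: open_interval_def)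
  from assms(3) have smooth: "\<And>n s. s \<in> I \<Longrightarrow> ((vel ^^ n) \<gamma>) differentiable (at s)"
    and dom: "\<And>s. s \<in> I \<Longrightarrow> \<gamma> s \<in> bcv_dom a"
    and unitT: "\<And>s. s \<in> I \<Longrightarrow> gm a b (\<gamma> s) (vel \<gamma> s) (vel \<gamma> s) = 1"
    by (auto simp: arclength_curve_def smooth_on_def)
  have gdiff: "\<gamma> differentiable (at s)" if "s \<in> I" for s using smooth[OF that, of 0] by simp
  have Tdiff: "vel \<gamma> differentiable (at s)" if "s \<in> I" for s using smooth[OF that, of 1] by simp
  have lampos: "lam a (\<gamma> s) > 0" if "s \<in> I" for s using dom[OF that] by (simp add: bcv_dom_def)
  then have lnz: "lam a (\<gamma> s) \<noteq> 0" if "s \<in> I" for s using that by (metis less_irrefl)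
  from assms(5) have kpos: "\<kappa> > 0"
    and Ndiff: "\<And>s. s \<in> I \<Longrightarrow> N differentiable (at s)"
    and Bdiff: "\<And>s. s \<in> I \<Longrightarrow> B differentiable (at s)"
    and oNN: "\<And>s. s \<in> I \<Longrightarrow> gm a b (\<gamma> s) (N s) (N s) = 1"
    and oBB: "\<And>s. s \<in> I \<Longrightarrow> gm a b (\<gamma> s) (B s) (B s) = 1"
    and oTN: "\<And>s. s \<in> I \<Longrightarrow> gm a b (\<gamma> s) (vel \<gamma> s) (N s) = 0"
    and oTB: "\<And>s. s \<in> I \<Longrightarrow> gm a b (\<gamma> s) (vel \<gamma> s) (B s) = 0"
    and oNB: "\<And>s. s \<in> I \<Longrightarrow> gm a b (\<gamma> s) (N s) (B s) = 0"
    and fT: "\<And>s. s \<in> I \<Longrightarrow> covd a b \<gamma> (vel \<gamma>) s = \<kappa> *\<^sub>R N s"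
    and fN: "\<And>s. s \<in> I \<Longrightarrow> covd a b \<gamma> N s = (- \<kappa>) *\<^sub>R vel \<gamma> s + \<tau> *\<^sub>R B s"
    and fB: "\<And>s. s \<in> I \<Longrightarrow> covd a b \<gamma> B s = (- \<tau>) *\<^sub>R N s"
    unfolding frenet_helix_def by auto
  define S where "S = \<kappa>^2 + \<tau>^2"
  let ?T = "vel \<gamma>"
  have cd1: "covdn a b 1 \<gamma> ?T s = \<kappa> *\<^sub>R N s" if "s \<in> I" for s
    using fT[OF that] by (simp add: covdn_def)
  have cd2: "covdn a b 2 \<gamma> ?T s = (- (\<kappa>^2)) *\<^sub>R ?T s + (\<kappa> * \<tau>) *\<^sub>R B s" if "s \<in> I" for s
  proof -
    have "covdn a b 2 \<gamma> ?T s = covd a b \<gamma> (covdn a b 1 \<gamma> ?T) s"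
      by (simp add: covdn_Suc[symmetric] numeral_2_eq_2)
    also have "\<dots> = \<kappa> *\<^sub>R covd a b \<gamma> N s + 0 *\<^sub>R covd a b \<gamma> N s"
      by (rule covd_comb[OF Iopen that]) (use cd1 Ndiff that in auto)
    also have "\<dots> = (- (\<kappa>^2)) *\<^sub>R ?T s + (\<kappa> * \<tau>) *\<^sub>R B s"
      unfolding fN[OF that] sc2 by (simp add: power2_eq_square)
    finally show ?thesis .
  qed
  have cd3: "covdn a b 3 \<gamma> ?T s = (- \<kappa> * S) *\<^sub>R N s" if "s \<in> I" for s
  proof -
    have "covdn a b 3 \<gamma> ?T s = covd a b \<gamma> (covdn a b 2 \<gamma> ?T) s"
      by (simp add: covdn_Suc[symmetric] numeral_3_eq_3)
    also have "\<dots> = (- (\<kappa>^2)) *\<^sub>R covd a b \<gamma> ?T s + (\<kappa> * \<tau>) *\<^sub>R covd a b \<gamma> B s"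
      by (rule covd_comb[OF Iopen that]) (use cd2 Tdiff Bdiff that in auto)
    also have "\<dots> = (- \<kappa> * S) *\<^sub>R N s"
      unfolding fT[OF that] fB[OF that] sc1 by (simp add: S_def algebra_simps power2_eq_square)
    finally show ?thesis .
  qed
  have cd4: "covdn a b 4 \<gamma> ?T s = (\<kappa>^2 * S) *\<^sub>R ?T s + (- \<kappa> * S * \<tau>) *\<^sub>R B s" if "s \<in> I" for s
  proof -
    have "covdn a b 4 \<gamma> ?T s = covd a b \<gamma> (covdn a b 3 \<gamma> ?T) s"
      by (simp add: covdn_Suc[symmetric] numeral_Bit0)
    also have "\<dots> = (- \<kappa> * S) *\<^sub>R covd a b \<gamma> N s + 0 *\<^sub>R covd a b \<gamma> N s"
      by (rule covd_comb[OF Iopen that]) (use cd3 Ndiff that in auto)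
    also have "\<dots> = (\<kappa>^2 * S) *\<^sub>R ?T s + (- \<kappa> * S * \<tau>) *\<^sub>R B s"
      unfolding fN[OF that] sc2 by (simp add: power2_eq_square)
    finally show ?thesis .
  qed
  have cd5: "covdn a b 5 \<gamma> ?T s = (\<kappa> * S^2) *\<^sub>R N s" if "s \<in> I" for s
  proof -
    have "covdn a b 5 \<gamma> ?T s = covd a b \<gamma> (covdn a b 4 \<gamma> ?T) s"
      by (simp add: covdn_Suc[symmetric] numeral_Bit1)
    also have "\<dots> = (\<kappa>^2 * S) *\<^sub>R covd a b \<gamma> ?T s + (- \<kappa> * S * \<tau>) *\<^sub>R covd a b \<gamma> B s"
      by (rule covd_comb[OF Iopen that]) (use cd4 Tdiff Bdiff that in auto)
    also have "\<dots> = (\<kappa> * S^2) *\<^sub>R N s"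
      unfolding fT[OF that] fB[OF that] sc1 by (simp add: S_def algebra_simps power2_eq_square)
    finally show ?thesis .
  qed
  define eT where "eT t = theta a b (\<gamma> t) (?T t)" for t
  define eN where "eN t = theta a b (\<gamma> t) (N t)" for t
  define eB where "eB t = theta a b (\<gamma> t) (B t)" for t
  define hB where "hB t = gm a b (\<gamma> t) (B t) (conn a b (\<gamma> t) (?T t) E3)" for t
  have compl: "(eT s)^2 + (eN s)^2 + (eB s)^2 = 1" and hsq: "(hB s)^2 = (b^2/4) * (1 - (eT s)^2 - (eB s)^2)"
    if "s \<in> I" for s
    using frame_facts[OF lnz[OF that] unitT[OF that] oNN[OF that] oBB[OF that] oTN[OF that] oTB[OF that] oNB[OF that]]
    unfolding eT_def eN_def eB_def hB_def by auto
  have Bc: "(4*a - b^2) * eN s * ((S + \<kappa>^2) * eB s + \<kappa> * \<tau> * eT s) = 0"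
    and Nc: "S^2 - (S + \<kappa>^2) * ((4*a - 3*b^2/4) - (4*a - b^2) * ((eT s)^2 + (eN s)^2)) - \<kappa> * \<tau> * (4*a - b^2) * eT s * eB s = 0"
    if "s \<in> I" for s
  proof -
    have "covdn a b 5 \<gamma> ?T s + curv a b (\<gamma> s) (covdn a b 3 \<gamma> ?T s) (?T s) (?T s)
        - curv a b (\<gamma> s) (covdn a b 2 \<gamma> ?T s) (covdn a b 1 \<gamma> ?T s) (?T s) = 0"
      using assms(4) that unfolding triharmonic_def Let_def by blast
    then have E: "(\<kappa> * S^2) *\<^sub>R N s + curvM a b (\<gamma> s) ((- \<kappa> * S) *\<^sub>R N s) (?T s) (?T s)
         - curvM a b (\<gamma> s) ((- (\<kappa>^2)) *\<^sub>R ?T s + (\<kappa> * \<tau>) *\<^sub>R B s) (\<kappa> *\<^sub>R N s) (?T s) = 0"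
      unfolding cd5[OF that] cd3[OF that] cd2[OF that] cd1[OF that] curv_eq[OF lnz[OF that]] .
    have k0: "\<kappa> \<noteq> 0" using kpos by simp
    note se = scal_eqs[OF unitT[OF that] oNN[OF that] oBB[OF that] oTN[OF that] oTB[OF that] oNB[OF that]
        eT_def[symmetric] eN_def[symmetric] eB_def[symmetric] S_def k0 E]
    show "(4*a - b^2) * eN s * ((S + \<kappa>^2) * eB s + \<kappa> * \<tau> * eT s) = 0" by (rule se(1))
    show "S^2 - (S + \<kappa>^2) * ((4*a - 3*b^2/4) - (4*a - b^2) * ((eT s)^2 + (eN s)^2)) - \<kappa> * \<tau> * (4*a - b^2) * eT s * eB s = 0"
      by (rule se(2))
  qed
  have dT: "(eT has_real_derivative \<kappa> * eN s) (at s)" if "s \<in> I" for s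
  proof -
    have "(eT has_real_derivative theta a b (\<gamma> s) (covd a b \<gamma> ?T s) + gm a b (\<gamma> s) (?T s) (conn a b (\<gamma> s) (vel \<gamma> s) E3)) (at s)"
      unfolding eT_def[abs_def] by (rule eta_deriv[OF gdiff[OF that] Tdiff[OF that] lnz[OF that]])
    then show ?thesis unfolding fT[OF that] h_self[OF lnz[OF that]] by (simp add: theta_scale eN_def)
  qed
  have dB: "(eB has_real_derivative (- \<tau> * eN s + hB s)) (at s)" if "s \<in> I" for s
  proof -
    have "(eB has_real_derivative theta a b (\<gamma> s) (covd a b \<gamma> B s) + gm a b (\<gamma> s) (B s) (conn a b (\<gamma> s) (vel \<gamma> s) E3)) (at s)"
      unfolding eB_def[abs_def] by (rule eta_deriv[OF gdiff[OF that] Bdiff[OF that] lnz[OF that]])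
    then show ?thesis unfolding fB[OF that] by (simp add: theta_scale theta_minus eN_def hB_def)
  qed
  have cN: "continuous (at s) eN" if "s \<in> I" for s
  proof -
    have "(eN has_real_derivative theta a b (\<gamma> s) (covd a b \<gamma> N s) + gm a b (\<gamma> s) (N s) (conn a b (\<gamma> s) (vel \<gamma> s) E3)) (at s)"
      unfolding eN_def[abs_def] by (rule eta_deriv[OF gdiff[OF that] Ndiff[OF that] lnz[OF that]])
    then show ?thesis by (rule DERIV_continuous)
  qed
  have eN0: "eN s = 0" if sI: "s \<in> I" for s
  proof (rule ccontr)
    assume nz: "eN s \<noteq> 0"
    obtain e where e: "e > 0" "\<forall>y. dist s y < e \<longrightarrow> eN y \<noteq> 0"
      using continuous_at_avoid[OF cN[OF sI] nz] by blast
    have ev1: "\<forall>\<^sub>F t in nhds s. eN t \<noteq> 0"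
      unfolding eventually_nhds_metric using e by (metis dist_commute)
    have ev2: "\<forall>\<^sub>F t in nhds s. t \<in> I" using Iopen sI by (rule eventually_nhds_in_open)
    have ev: "\<forall>\<^sub>F t in nhds s. (S + \<kappa>^2) * eB t + \<kappa> * \<tau> * eT t = 0"
      using ev1 ev2
    proof eventually_elim
      case (elim t)
      then show ?case using Bc[of t] C by simp
    qed
    have R0: "(S + \<kappa>^2) * eB s + \<kappa> * \<tau> * eT s = 0" using eventually_nhds_x_imp_x[OF ev] .
    have dR: "((\<lambda>t. (S + \<kappa>^2) * eB t + \<kappa> * \<tau> * eT t) has_real_derivative
        (S + \<kappa>^2) * (- \<tau> * eN s + hB s) + \<kappa> * \<tau> * (\<kappa> * eN s)) (at s)"
      by (intro DERIV_add DERIV_cmult dB[OF sI] dT[OF sI])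
    have "((\<lambda>t. 0::real) has_real_derivative (S + \<kappa>^2) * (- \<tau> * eN s + hB s) + \<kappa> * \<tau> * (\<kappa> * eN s)) (at s)"
      using DERIV_cong_ev[OF refl ev refl] dR by blast
    then have iv: "(S + \<kappa>^2) * (- \<tau> * eN s + hB s) + \<kappa> * \<tau> * (\<kappa> * eN s) = 0"
      using DERIV_unique DERIV_const by blast
    show False
      by (rule final_alg[OF kpos S_def refl compl[OF sI] R0 Nc[OF sI] iv hsq[OF sI] nz])
  qed
  have "\<exists>c0. \<forall>s\<in>I. eT s = c0"
  proof (rule has_field_derivative_zero_constant)
    show "convex I" using Iint by (simp add: is_interval_convex)
    fix x assume "x \<in> I"
    then show "(eT has_field_derivative 0) (at x within I)"
      using dT[of x] eN0[of x] by (simp add: has_field_derivative_at_within)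
  qed
  then obtain c0 where c0: "\<And>s. s \<in> I \<Longrightarrow> eT s = c0" by blast
  obtain s0 where s0: "s0 \<in> I" using Ine by blast
  have c0lt: "c0^2 < 1"
  proof (rule ccontr)
    assume "\<not> c0^2 < 1"
    moreover have "c0^2 \<le> 1" using compl[OF s0] c0[OF s0] eN0[OF s0]
      by (simp add: add_nonneg_eq_0_iff) (smt (verit) zero_le_power2)
    ultimately have c1: "c0^2 = 1" by simp
    have Tv: "?T s = c0 *\<^sub>R E3" if sI: "s \<in> I" for s
    proof -
      have "gm a b (\<gamma> s) (?T s) (?T s) = ((?T s $ 1)^2 + (?T s $ 2)^2) / (lam a (\<gamma> s))^2 + (eT s)^2"
        by (simp add: gm_def eT_def power2_eq_square)
      then have "((?T s $ 1)^2 + (?T s $ 2)^2) / (lam a (\<gamma> s))^2 = 0"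
        using unitT[OF sI] c0[OF sI] c1 by simp
      then have "(?T s $ 1)^2 + (?T s $ 2)^2 = 0" using lnz[OF sI] by simp
      then have t12: "?T s $ 1 = 0" "?T s $ 2 = 0" by (simp_all add: add_nonneg_eq_0_iff)
      then have "?T s $ 3 = c0" using c0[OF sI] by (simp add: eT_def theta_def)
      then show ?thesis using t12 by (simp add: vec_eq_iff forall_3 E3_def axis_def)
    qed
    have "covd a b \<gamma> ?T s0 = covd a b \<gamma> (\<lambda>t. c0 *\<^sub>R E3) s0"
      by (rule covd_local[OF Iopen s0]) (use Tv in auto)
    also have "\<dots> = conn a b (\<gamma> s0) (c0 *\<^sub>R E3) (c0 *\<^sub>R E3)"
      using Tv[OF s0] by (simp add: covd_def vector_derivative_const_at)
    also have "\<dots> = 0"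
      unfolding conn_scale conn_E3[OF lnz[OF s0]]
      by (simp add: vec_eq_iff forall_3 E3_def axis_def)
    finally have "\<kappa> *\<^sub>R N s0 = 0" using fT[OF s0] by simp
    then have "N s0 = 0" using kpos by simp
    then show False using oNN[OF s0] by (simp add: gm_zero1)
  qed
  define st where "st = sqrt (1 - c0^2)"
  have st: "st > 0" "st^2 = 1 - c0^2" using c0lt by (simp_all add: st_def)
  define k where "k = 1 / st"
  define m where "m = c0 / st"
  have kst: "k * st = 1" "m * st = c0" using st by (simp_all add: k_def m_def)
  define al where "al u = \<gamma> (k*u) - (m*u) *\<^sub>R E3" for u
  define J where "J = (\<lambda>s. st * s) ` I"
  have kJ: "k * u \<in> I" if "u \<in> J" for u
    using that kst by (auto simp: J_def mult.assoc[symmetric])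
  have Jopen: "open J"
  proof -
    have "J = (*\<^sub>R) st ` I" by (simp add: J_def)
    then show ?thesis using open_scaling[OF _ Iopen, of st] st by simp
  qed
  have Jint: "is_interval J"
  proof -
    have "J = (*\<^sub>R) st ` I" by (simp add: J_def)
    then show ?thesis using convex_scaling[of I st] Iint by (simp add: is_interval_convex_1)
  qed
  have Jne: "J \<noteq> {}" using Ine by (simp add: J_def)
  define F where "F n u = (if n = 0 then al u else k^n *\<^sub>R (vel ^^ n) \<gamma> (k*u) - (if n = 1 then m *\<^sub>R E3 else 0))" for n u
  have Fd: "(F n has_vector_derivative F (Suc n) u) (at u)" if "u \<in> J" for n u
  proof (cases "n = 0")
    case True
    have e: "F 0 = (\<lambda>u. 1 *\<^sub>R (vel ^^ 0) \<gamma> (k*u) - (m*u) *\<^sub>R E3)" by (simp add: fun_eq_iff F_def al_def)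
    have d1: "((\<lambda>u. 1 *\<^sub>R (vel ^^ 0) \<gamma> (k*u) - 0) has_vector_derivative (1*k) *\<^sub>R vel ((vel ^^ 0) \<gamma>) (k*u)) (at u)"
      by (rule chain_lin) (use smooth[OF kJ[OF that], of 0] in simp)
    have d2: "((\<lambda>u. (m*u) *\<^sub>R E3) has_vector_derivative m *\<^sub>R E3) (at u)"
      using has_vector_derivative_scaleR[OF DERIV_cmult[OF DERIV_ident, of m] has_vector_derivative_const[of E3]]
      by simp
    have "(F 0 has_vector_derivative (k *\<^sub>R vel \<gamma> (k*u) - m *\<^sub>R E3)) (at u)"
      unfolding e using has_vector_derivative_diff[OF d1 d2] by simp
    then show ?thesis using True by (simp add: F_def)
  next
    case False
    have e: "F n = (\<lambda>u. k^n *\<^sub>R (vel ^^ n) \<gamma> (k*u) - (if n = 1 then m *\<^sub>R E3 else 0))"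
      using False by (simp add: fun_eq_iff F_def)
    have "(F n has_vector_derivative (k^n * k) *\<^sub>R vel ((vel ^^ n) \<gamma>) (k*u)) (at u)"
      unfolding e by (rule chain_lin) (use smooth[OF kJ[OF that]] in simp)
    moreover have "F (Suc n) u = (k^n * k) *\<^sub>R vel ((vel ^^ n) \<gamma>) (k*u)"
      using False by (simp add: F_def mult.commute)
    ultimately show ?thesis by simp
  qed
  have Fn: "\<forall>u\<in>J. (vel ^^ n) al u = F n u" for n
  proof (induction n)
    case 0
    then show ?case by (simp add: F_def)
  next
    case (Suc n)
    show ?case
    proof
      fix u assume uJ: "u \<in> J"
      have "\<forall>\<^sub>F t in nhds u. t \<in> J" using Jopen uJ by (rule eventually_nhds_in_open)
      then have "\<forall>\<^sub>F t in nhds u. t \<in> UNIV \<longrightarrow> (vel ^^ n) al t = F n t"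
        by eventually_elim (use Suc.IH in auto)
      then have "vector_derivative ((vel ^^ n) al) (at u within UNIV) = vector_derivative (F n) (at u within UNIV)"
        by (rule vector_derivative_cong_eq) auto
      also have "\<dots> = F (Suc n) u" using vector_derivative_at[OF Fd[OF uJ]] by simp
      finally show "(vel ^^ Suc n) al u = F (Suc n) u" by (simp add: vel_def)
    qed
  qed
  have al_smooth: "smooth_on J al"
    unfolding smooth_on_def
  proof (intro allI ballI)
    fix n u assume uJ: "u \<in> J"
    have "((vel ^^ n) al has_vector_derivative F (Suc n) u) (at u)"
      by (rule has_vector_derivative_transform_within_open[OF Fd[OF uJ] Jopen uJ]) (use Fn in auto)
    then show "(vel ^^ n) al differentiable (at u)" by (rule differentiableI_vector)
  qed
  have vel_al: "vel al u = k *\<^sub>R ?T (k*u) - m *\<^sub>R E3" if "u \<in> J" for u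
    using Fn[of 1] that by (simp add: F_def)
  have al_lam: "lam a (al u) = lam a (\<gamma> (k*u))" for u by (simp add: al_def lam_shift)
  have al_gm: "gm a b (al u) = gm a b (\<gamma> (k*u))" for u by (simp add: al_def gm_shift)
  have gE3: "gm a b p E3 E3 = 1" for p by (simp add: gm_E3 theta_E3)
  have hopf: "hopf_generator a b J al"
    unfolding hopf_generator_def open_interval_def arclength_curve_def
  proof (intro conjI ballI)
    show "J \<noteq> {}" "open J" "is_interval J" "smooth_on J al" by (fact Jne Jopen Jint al_smooth)+
  next
    fix u assume uJ: "u \<in> J"
    show "al u \<in> bcv_dom a" using lampos[OF kJ[OF uJ]] by (simp add: bcv_dom_def al_lam)
    have eTk: "theta a b (\<gamma> (k*u)) (?T (k*u)) = c0" using c0[OF kJ[OF uJ]] by (simp add: eT_def)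
    have "gm a b (\<gamma> (k*u)) (k *\<^sub>R ?T (k*u) - m *\<^sub>R E3) (k *\<^sub>R ?T (k*u) - m *\<^sub>R E3)
        = k^2 * gm a b (\<gamma> (k*u)) (?T (k*u)) (?T (k*u)) - 2*k*m*theta a b (\<gamma> (k*u)) (?T (k*u)) + m^2"
      by (simp add: gm_lin gm_E3 gm_E3' theta_E3 theta_diff theta_scale power2_eq_square algebra_simps)
    also have "\<dots> = (1 - c0^2) / st^2"
      using unitT[OF kJ[OF uJ]] eTk st by (simp add: k_def m_def power2_eq_square field_simps)
    also have "\<dots> = 1" using st c0lt by simp
    finally show "gm a b (al u) (vel al u) (vel al u) = 1"
      unfolding al_gm vel_al[OF uJ] .
    show "gm a b (al u) (vel al u) E3 = 0"
      unfolding al_gm vel_al[OF uJ]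
      using eTk by (simp add: gm_E3 theta_diff theta_scale theta_E3 k_def m_def)
  qed
  have geo: "geodesic_of_hopf_cylinder a b I \<gamma> J al"
    unfolding geodesic_of_hopf_cylinder_def
  proof (intro exI ballI conjI)
    fix s assume sI: "s \<in> I"
    show "(\<lambda>s. st * s) differentiable (at s)" "(\<lambda>s. c0 * s) differentiable (at s)"
      by (intro derivative_intros)+
    show "st * s \<in> J" using sI unfolding J_def by (rule imageI)
    have ks: "k * (st * s) = s" using kst by (simp add: mult.assoc[symmetric])
    have ms: "m * (st * s) = c0 * s" using kst by (simp add: mult.assoc[symmetric])
    show "\<gamma> s = psi (c0 * s) (al (st * s))"
      by (simp only: psi_def al_def ks ms) simp
    show "gm a b (\<gamma> s) (covd a b \<gamma> (vel \<gamma>) s) E3 = 0"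
      using eN0[OF sI] by (simp add: fT[OF sI] gm_E3 theta_scale eN_def)
    have sJ: "st * s \<in> J" using sI unfolding J_def by (rule imageI)
    have vu: "vel al (st * s) = k *\<^sub>R ?T s - m *\<^sub>R E3"
      using vel_al[OF sJ] unfolding ks .
    show "gm a b (\<gamma> s) (covd a b \<gamma> (vel \<gamma>) s) (vel al (st * s)) = 0"
      unfolding vu fT[OF sI] using eN0[OF sI] oTN[OF sI] gm_sym[of a b "\<gamma> s" "N s" "?T s"]
      by (simp add: gm_lin gm_E3 theta_scale eN_def)
  qed
  show ?thesis using hopf geo by blast
qed

end
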